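(* Let $H$ be a Hamiltonian on a finite-dimensional Hilbert space $\mathcal{H}$, $\rho_\beta=e^{-\beta H}/\mathrm{Tr}[e^{-\beta H}]$, and let $\{\mathcal{L}_\delta\}_{\delta\ge0}$ be a family of primitive Lindbladians, each KMS-symmetric with respect to $\rho_\beta$ (hence all with fixed point $\rho_\beta$). For $X,Y$ self-adjoint put $X(s)=e^{isH}Xe^{-isH}$ and $\mathcal{E}^{(\delta)}_{XY}(s):=-\langle Y(s\beta),\mathcal{L}^\dagger_\delta(X(s\beta))\rangle_{\rho_\beta}$. Assume that for all self-adjoint $X,Y$ there is a function $\mathcal{E}^{(\infty)}_{XY}:\mathbb{R}\to\mathbb{C}$ with $\mathcal{E}^{(\delta)}_{XY}=f_\delta\star\mathcal{E}^{(\infty)}_{XY}$ for every $\delta$, where $f_\delta:\mathbb{R}\to\mathbb{R}_+$ are integrable functions satisfying the semigroup property: for any $\delta\le\delta'$ there is $g_{\delta,\delta'}:\mathbb{R}\to\mathbb{R}_+$ with $f_\delta=g_{\delta,\delta'}\star f_{\delta'}$. Then for all $\delta\le\delta'$, $$\lambda_{\mathrm{Gap}}(\mathcal{L}_\delta)\ge\|g_{\delta,\delta'}\|_1\,\lambda_{\mathrm{Gap}}(\mathcal{L}_{\delta'})\quad\text{and}\quad \alpha_{\mathrm{MLSI}}(\mathcal{L}_\delta)\ge\|g_{\delta,\delta'}\|_1\,\alpha_{\mathrm{MLSI}}(\mathcal{L}_{\delta'}).$$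
   Context: $(f\star h)(s)=\int_{\mathbb{R}}f(r)h(s-r)dr$. KMS inner product $\langle X,Y\rangle_{\rho_\beta}=\mathrm{Tr}[\rho_\beta^{1/2}X^\dagger\rho_\beta^{1/2}Y]$, $\|X\|^2_{\rho_\beta}=\langle X,X\rangle_{\rho_\beta}$; $\mathcal{L}$ is KMS-symmetric if $\mathcal{L}^\dagger$ is self-adjoint for this inner product. Spectral gap: $\lambda_{\mathrm{Gap}}(\mathcal{L})=\inf_{X=X^\dagger}\frac{-\langle X,\mathcal{L}^\dagger(X)\rangle_{\rho_\beta}}{\|X-\langle\mathbb{I},X\rangle_{\rho_\beta}\mathbb{I}\|^2_{\rho_\beta}}$. MLSI constant: $\alpha_{\mathrm{MLSI}}(\mathcal{L})=\inf_{\sigma}\frac{\mathrm{EP}(\sigma)}{D(\sigma\|\rho_\beta)}$ over states $\sigma$, where $D(\sigma\|\rho_\beta)=\mathrm{Tr}[\sigma(\log\sigma-\log\rho_\beta)]$ and $\mathrm{EP}(\sigma)=-\mathrm{Tr}[\mathcal{L}(\sigma)(\log\sigma-\log\rho_\beta)]$. *)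

theory Defs
  imports "HOL-Analysis.Analysis" "Jordan_Normal_Form.Matrix"
begin

definition adj :: "complex mat \<Rightarrow> complex mat" where
  "adj A = Matrix.mat (dim_col A) (dim_row A) (\<lambda>(i,j). cnj (A $$ (j,i)))"

definition mtrace :: "complex mat \<Rightarrow> complex" where
  "mtrace A = (\<Sum>i<dim_row A. A $$ (i,i))"

definition hermitian :: "nat \<Rightarrow> complex mat \<Rightarrow> bool" where
  "hermitian n A \<longleftrightarrow> A \<in> carrier_mat n n \<and> adj A = A"

definition unitary :: "nat \<Rightarrow> complex mat \<Rightarrow> bool" where
  "unitary n U \<longleftrightarrow> U \<in> carrier_mat n n \<and> adj U * U = 1\<^sub>m n \<and> U * adj U = 1\<^sub>m n"

text \<open>Functional calculus of a Hermitian matrix via its spectral decomposition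
  A = U diag(d) U^dagger (independent of the chosen decomposition).\<close>
definition matfun :: "nat \<Rightarrow> (real \<Rightarrow> complex) \<Rightarrow> complex mat \<Rightarrow> complex mat" where
  "matfun n f A = (SOME B. \<exists>U (d::nat \<Rightarrow> real). unitary n U
      \<and> A = U * mat_diag n (\<lambda>i. complex_of_real (d i)) * adj U
      \<and> B = U * mat_diag n (\<lambda>i. f (d i)) * adj U)"

definition psd :: "nat \<Rightarrow> complex mat \<Rightarrow> bool" where
  "psd n A \<longleftrightarrow> hermitian n A \<and>
     (\<forall>v \<in> carrier_vec n. 0 \<le> Re (conjugate v \<bullet> (A *\<^sub>v v)))"

definition posdef :: "nat \<Rightarrow> complex mat \<Rightarrow> bool" where
  "posdef n A \<longleftrightarrow> hermitian n A \<and>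
     (\<forall>v \<in> carrier_vec n. v \<noteq> 0\<^sub>v n \<longrightarrow> 0 < Re (conjugate v \<bullet> (A *\<^sub>v v)))"

definition density :: "nat \<Rightarrow> complex mat \<Rightarrow> bool" where
  "density n \<sigma> \<longleftrightarrow> psd n \<sigma> \<and> mtrace \<sigma> = 1"

definition gibbs :: "nat \<Rightarrow> real \<Rightarrow> complex mat \<Rightarrow> complex mat" where
  "gibbs n \<beta> H = (1 / mtrace (matfun n (\<lambda>x. complex_of_real (exp (- \<beta> * x))) H))
      \<cdot>\<^sub>m matfun n (\<lambda>x. complex_of_real (exp (- \<beta> * x))) H"

definition msqrt :: "nat \<Rightarrow> complex mat \<Rightarrow> complex mat" where
  "msqrt n A = matfun n (\<lambda>x. complex_of_real (sqrt x)) A"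

definition mlog :: "nat \<Rightarrow> complex mat \<Rightarrow> complex mat" where
  "mlog n A = matfun n (\<lambda>x. complex_of_real (ln x)) A"

definition kms :: "nat \<Rightarrow> complex mat \<Rightarrow> complex mat \<Rightarrow> complex mat \<Rightarrow> complex" where
  "kms n \<rho> X Y = mtrace (msqrt n \<rho> * adj X * msqrt n \<rho> * Y)"

definition heis :: "nat \<Rightarrow> complex mat \<Rightarrow> real \<Rightarrow> complex mat \<Rightarrow> complex mat" where
  "heis n H s X = matfun n (\<lambda>x. exp (\<i> * complex_of_real (s * x))) H * X
                  * matfun n (\<lambda>x. exp (- \<i> * complex_of_real (s * x))) H"

definition lindbladian :: "nat \<Rightarrow> (complex mat \<Rightarrow> complex mat) \<Rightarrow> bool" where
  "lindbladian n L \<longleftrightarrow> (\<exists>K Js. hermitian n K \<and> set Js \<subseteq> carrier_mat n n \<and>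
     (\<forall>\<rho> \<in> carrier_mat n n. L \<rho> =
        (- \<i>) \<cdot>\<^sub>m (K * \<rho> - \<rho> * K) +
        foldr (\<lambda>J acc. (J * \<rho> * adj J - (1/2) \<cdot>\<^sub>m (adj J * J * \<rho> + \<rho> * (adj J * J))) + acc)
              Js (0\<^sub>m n n)))"

definition hs_adj :: "nat \<Rightarrow> (complex mat \<Rightarrow> complex mat) \<Rightarrow> complex mat \<Rightarrow> complex mat" where
  "hs_adj n L X = (THE Y. Y \<in> carrier_mat n n \<and>
      (\<forall>A \<in> carrier_mat n n. mtrace (adj Y * A) = mtrace (adj X * L A)))"

definition kms_symmetric :: "nat \<Rightarrow> complex mat \<Rightarrow> (complex mat \<Rightarrow> complex mat) \<Rightarrow> bool" where
  "kms_symmetric n \<rho> L \<longleftrightarrow> (\<forall>X \<in> carrier_mat n n. \<forall>Y \<in> carrier_mat n n.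
      kms n \<rho> X (hs_adj n L Y) = kms n \<rho> (hs_adj n L X) Y)"

definition primitive :: "nat \<Rightarrow> (complex mat \<Rightarrow> complex mat) \<Rightarrow> bool" where
  "primitive n L \<longleftrightarrow> (\<exists>!\<sigma>. density n \<sigma> \<and> L \<sigma> = 0\<^sub>m n n) \<and>
      (\<forall>\<sigma>. density n \<sigma> \<and> L \<sigma> = 0\<^sub>m n n \<longrightarrow> posdef n \<sigma>)"

section \<open>Spectral gap and MLSI constant (as extended reals; inf of empty set = \<infinity>)\<close>

definition spectral_gap :: "nat \<Rightarrow> complex mat \<Rightarrow> (complex mat \<Rightarrow> complex mat) \<Rightarrow> ereal" where
  "spectral_gap n \<rho> L = Inf { ereal (Re (- kms n \<rho> X (hs_adj n L X)) /
        Re (kms n \<rho> (X - kms n \<rho> (1\<^sub>m n) X \<cdot>\<^sub>m 1\<^sub>m n) (X - kms n \<rho> (1\<^sub>m n) X \<cdot>\<^sub>m 1\<^sub>m n)))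
      | X. hermitian n X \<and> X - kms n \<rho> (1\<^sub>m n) X \<cdot>\<^sub>m 1\<^sub>m n \<noteq> 0\<^sub>m n n }"

definition rel_entropy :: "nat \<Rightarrow> complex mat \<Rightarrow> complex mat \<Rightarrow> real" where
  "rel_entropy n \<sigma> \<rho> = Re (mtrace (\<sigma> * (mlog n \<sigma> - mlog n \<rho>)))"

definition entropy_prod :: "nat \<Rightarrow> (complex mat \<Rightarrow> complex mat) \<Rightarrow> complex mat \<Rightarrow> complex mat \<Rightarrow> real" where
  "entropy_prod n L \<rho> \<sigma> = Re (- mtrace (L \<sigma> * (mlog n \<sigma> - mlog n \<rho>)))"

definition mlsi_const :: "nat \<Rightarrow> complex mat \<Rightarrow> (complex mat \<Rightarrow> complex mat) \<Rightarrow> ereal" where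
  "mlsi_const n \<rho> L = Inf { ereal (entropy_prod n L \<rho> \<sigma> / rel_entropy n \<sigma> \<rho>)
      | \<sigma>. density n \<sigma> \<and> posdef n \<sigma> \<and> \<sigma> \<noteq> \<rho> }"

definition is_convolution :: "(real \<Rightarrow> real) \<Rightarrow> (real \<Rightarrow> complex) \<Rightarrow> (real \<Rightarrow> complex) \<Rightarrow> bool" where
  "is_convolution f h e \<longleftrightarrow> h \<in> borel_measurable lborel \<and>
     (\<forall>s. integrable lborel (\<lambda>r. complex_of_real (f r) * h (s - r)) \<and>
          e s = (LINT r|lborel. complex_of_real (f r) * h (s - r)))"

definition corr_E :: "nat \<Rightarrow> real \<Rightarrow> complex mat \<Rightarrow> (complex mat \<Rightarrow> complex mat)
      \<Rightarrow> complex mat \<Rightarrow> complex mat \<Rightarrow> real \<Rightarrow> complex" where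
  "corr_E n \<beta> H L X Y s = - kms n (gibbs n \<beta> H) (heis n H (s * \<beta>) Y)
        (hs_adj n L (heis n H (s * \<beta>) X))"

definition l1_norm :: "(real \<Rightarrow> real) \<Rightarrow> ereal" where
  "l1_norm g = enn2ereal (\<integral>\<^sup>+ r. ennreal \<bar>g r\<bar> \<partial>lborel)"

end

theory Submission
  imports Defs "HOL-Computational_Algebra.Fundamental_Theorem_Algebra" "Jordan_Normal_Form.Char_Poly"
begin


lemma adj_dim[simp]: "dim_row (adj A) = dim_col A" "dim_col (adj A) = dim_row A"
  by (auto simp: adj_def)

lemma adj_index[simp]: "i < dim_col A \<Longrightarrow> j < dim_row A \<Longrightarrow> adj A $$ (i,j) = cnj (A $$ (j,i))"
  by (auto simp: adj_def)

lemma adj_carrier[simp, intro]: "A \<in> carrier_mat n m \<Longrightarrow> adj A \<in> carrier_mat m n"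
  unfolding carrier_mat_def by simp

lemma adj_adj[simp]: "adj (adj A) = A"
  by (intro eq_matI, auto)

lemma mat_diag_dims[simp]: "dim_row (mat_diag n f) = n" "dim_col (mat_diag n f) = n"
  by (auto simp: mat_diag_def)

lemma sq_one_right[simp]: fixes A :: "'a::semiring_1 mat" shows "A \<in> carrier_mat n n \<Longrightarrow> A * 1\<^sub>m n = A"
  by (rule right_mult_one_mat)

lemma sq_one_left[simp]: fixes A :: "'a::semiring_1 mat" shows "A \<in> carrier_mat n n \<Longrightarrow> 1\<^sub>m n * A = A"
  by (rule left_mult_one_mat)

lemma sq_mult_carrier[simp]: "A \<in> carrier_mat n n \<Longrightarrow> B \<in> carrier_mat n n \<Longrightarrow> A * B \<in> carrier_mat n n"
  by (rule mult_carrier_mat)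

lemma sq_assoc: "A \<in> carrier_mat n n \<Longrightarrow> B \<in> carrier_mat n n \<Longrightarrow> C \<in> carrier_mat n n \<Longrightarrow> A * B * C = A * (B * C)"
  by (rule assoc_mult_mat)

lemma assoc_one: fixes A B X :: "'a::semiring_1 mat" shows "A \<in> carrier_mat n n \<Longrightarrow> B \<in> carrier_mat n n \<Longrightarrow> X \<in> carrier_mat n m \<Longrightarrow> A * B = 1\<^sub>m n \<Longrightarrow> A * (B * X) = X"
proof -
  assume a: "A \<in> carrier_mat n n" "B \<in> carrier_mat n n" "X \<in> carrier_mat n m" "A * B = 1\<^sub>m n"
  have "A * (B * X) = (A * B) * X" using assoc_mult_mat[OF a(1,2,3)] by simp
  then show ?thesis using a(3,4) left_mult_one_mat[OF a(3)] by simp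
qed

lemma mult_entry: "A \<in> carrier_mat n m \<Longrightarrow> B \<in> carrier_mat m p \<Longrightarrow> i < n \<Longrightarrow> j < p \<Longrightarrow>
  (A * B) $$ (i,j) = (\<Sum>l<m. A $$ (i,l) * B $$ (l,j))"
  by (auto simp: scalar_prod_def lessThan_atLeast0 intro!: sum.cong)

lemma adj_mult: assumes "A \<in> carrier_mat n m" "B \<in> carrier_mat m k"
  shows "adj (A * B) = adj B * adj A"
proof (rule eq_matI)
  fix i j assume ij: "i < dim_row (adj B * adj A)" "j < dim_col (adj B * adj A)"
  then have i: "i < k" and j: "j < n" using assms by auto
  have "adj (A * B) $$ (i,j) = cnj ((A*B) $$ (j,i))" using assms i j by auto
  also have "\<dots> = (\<Sum>l<m. cnj (A $$ (j,l)) * cnj (B $$ (l,i)))"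
    using mult_entry[OF assms j i] by simp
  also have "\<dots> = (adj B * adj A) $$ (i,j)"
    by (subst mult_entry[of _ k m _ n], insert assms i j, auto simp: mult.commute intro!: sum.cong)
  finally show "adj (A * B) $$ (i,j) = (adj B * adj A) $$ (i,j)" .
qed (insert assms, auto)

lemma adj_add: "A \<in> carrier_mat n m \<Longrightarrow> B \<in> carrier_mat n m \<Longrightarrow> adj (A + B) = adj A + adj B"
  by (intro eq_matI, auto)

lemma adj_minus: "A \<in> carrier_mat n m \<Longrightarrow> B \<in> carrier_mat n m \<Longrightarrow> adj (A - B) = adj A - adj B"
  by (intro eq_matI, auto)

lemma adj_smult: "adj (c \<cdot>\<^sub>m A) = cnj c \<cdot>\<^sub>m adj A"
  by (intro eq_matI, auto)

lemma adj_one[simp]: "adj (1\<^sub>m n) = 1\<^sub>m n"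
  by (intro eq_matI, auto)

lemma adj_zero[simp]: "adj (0\<^sub>m n m) = 0\<^sub>m m n"
  by (intro eq_matI, auto)

lemma adj_diag: "adj (mat_diag n f) = mat_diag n (\<lambda>i. cnj (f i))"
  by (intro eq_matI, auto simp: mat_diag_def)

lemma adj_diag_real[simp]: "adj (mat_diag n (\<lambda>i. complex_of_real (f i))) = mat_diag n (\<lambda>i. complex_of_real (f i))"
  by (simp add: adj_diag)

lemma mtrace_comm: assumes "A \<in> carrier_mat n m" "B \<in> carrier_mat m n"
  shows "mtrace (A * B) = mtrace (B * A)"
proof -
  have "mtrace (A * B) = (\<Sum>i<n. \<Sum>l<m. A $$ (i,l) * B $$ (l,i))"
    unfolding mtrace_def using assms by (simp add: mult_entry[OF assms] del: index_mult_mat(1))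
  also have "\<dots> = (\<Sum>l<m. \<Sum>i<n. B $$ (l,i) * A $$ (i,l))"
    by (subst sum.swap, simp add: mult.commute)
  also have "\<dots> = mtrace (B * A)"
    unfolding mtrace_def using assms by (simp add: mult_entry[OF assms(2,1)] del: index_mult_mat(1))
  finally show ?thesis .
qed

lemma mtrace_add: "A \<in> carrier_mat n n \<Longrightarrow> B \<in> carrier_mat n n \<Longrightarrow> mtrace (A + B) = mtrace A + mtrace B"
  by (auto simp: mtrace_def sum.distrib)

lemma mtrace_minus: "A \<in> carrier_mat n n \<Longrightarrow> B \<in> carrier_mat n n \<Longrightarrow> mtrace (A - B) = mtrace A - mtrace B"
  by (auto simp: mtrace_def sum_subtractf)

lemma mtrace_smult: "A \<in> carrier_mat n n \<Longrightarrow> mtrace (c \<cdot>\<^sub>m A) = c * mtrace A"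
  by (auto simp: mtrace_def sum_distrib_left)

lemma mtrace_adj: "A \<in> carrier_mat n n \<Longrightarrow> mtrace (adj A) = cnj (mtrace A)"
  by (auto simp: mtrace_def)

lemma mtrace_diag: "mtrace (mat_diag n f) = (\<Sum>i<n. f i)"
  by (auto simp: mtrace_def mat_diag_def)


lemma sum_split_shift: fixes k n :: nat shows "k \<le> n \<Longrightarrow> (\<Sum>j<n. h j) = (\<Sum>j<k. h j) + (\<Sum>b<n-k. h (b+k))"
proof -
  assume kn: "k \<le> n"
  have "(\<Sum>j<n. h j) = sum h {0..<k} + sum h {k..<n}"
    using sum.atLeastLessThan_concat[of 0 k n h] kn by (simp add: lessThan_atLeast0)
  also have "sum h {k..<n} = sum h {0+k..<(n-k)+k}" using kn by simp
  also have "\<dots> = (\<Sum>b<n-k. h (b+k))" by (subst sum.shift_bounds_nat_ivl, simp add: lessThan_atLeast0)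
  finally show ?thesis by (simp add: lessThan_atLeast0)
qed

definition diag_upto :: "nat \<Rightarrow> nat \<Rightarrow> complex mat \<Rightarrow> bool" where
  "diag_upto n k B \<longleftrightarrow> (\<forall>i<n. \<forall>j<n. i \<noteq> j \<longrightarrow> (i < k \<or> j < k) \<longrightarrow> B $$ (i,j) = 0)"

lemma char_poly_root: fixes C :: "complex mat" assumes C: "C \<in> carrier_mat m m" and m: "m > 0"
  shows "\<exists>z. eigenvalue C z"
proof -
  have "degree (char_poly C) = m" using degree_monic_char_poly[OF C] by simp
  then have "\<not> constant (poly (char_poly C))" using m by (simp add: constant_degree)
  then obtain z where "poly (char_poly C) z = 0" using fundamental_theorem_of_algebra by blast
  then show ?thesis using eigenvalue_root_char_poly[OF C] by blast
qed

lemma eigvec_sub: fixes B :: "complex mat"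
  assumes B: "B \<in> carrier_mat n n" and D: "diag_upto n k B" and k: "k < n"
  shows "\<exists>x \<mu>. x \<in> carrier_vec n \<and> x \<noteq> 0\<^sub>v n \<and> (\<forall>i<k. x $ i = 0) \<and> B *\<^sub>v x = \<mu> \<cdot>\<^sub>v x"
proof -
  define C where "C = Matrix.mat (n-k) (n-k) (\<lambda>(a,b). B $$ (a+k, b+k))"
  have C: "C \<in> carrier_mat (n-k) (n-k)" unfolding C_def by simp
  obtain \<mu> where "eigenvalue C \<mu>" using char_poly_root[OF C] k by auto
  then obtain y where y: "eigenvector C y \<mu>" unfolding eigenvalue_def by blast
  then have yc: "y \<in> carrier_vec (n-k)" and y0: "y \<noteq> 0\<^sub>v (n-k)" and Cy: "C *\<^sub>v y = \<mu> \<cdot>\<^sub>v y"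
    unfolding eigenvector_def using C by auto
  define x where "x = vec n (\<lambda>i. if i < k then 0 else y $ (i - k))"
  have xc: "x \<in> carrier_vec n" unfolding x_def by simp
  have x0: "x \<noteq> 0\<^sub>v n"
  proof
    assume "x = 0\<^sub>v n"
    then have "\<And>b. b < n - k \<Longrightarrow> y $ b = 0"
    proof -
      fix b assume b: "b < n - k" and x: "x = 0\<^sub>v n"
      have "y $ b = x $ (b+k)" unfolding x_def using b by simp
      then show "y $ b = 0" using x b by simp
    qed
    then have "y = 0\<^sub>v (n-k)" using yc by (intro eq_vecI, auto)
    then show False using y0 by simp
  qed
  have "B *\<^sub>v x = \<mu> \<cdot>\<^sub>v x"
  proof (rule eq_vecI)
    fix i assume "i < dim_vec (\<mu> \<cdot>\<^sub>v x)"
    then have i: "i < n" using xc by simp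
    have "(B *\<^sub>v x) $ i = (\<Sum>j<n. B $$ (i,j) * x $ j)"
      using B i xc by (simp add: scalar_prod_def lessThan_atLeast0)
    also have "\<dots> = (\<Sum>j<k. B $$ (i,j) * x $ j) + (\<Sum>b<n-k. B $$ (i,b+k) * x $ (b+k))"
      using k by (intro sum_split_shift, simp)
    also have "(\<Sum>j<k. B $$ (i,j) * x $ j) = 0" unfolding x_def using k by simp
    also have "(\<Sum>b<n-k. B $$ (i,b+k) * x $ (b+k)) = (\<Sum>b<n-k. B $$ (i,b+k) * y $ b)"
      unfolding x_def by (intro sum.cong, auto)
    finally have eq: "(B *\<^sub>v x) $ i = (\<Sum>b<n-k. B $$ (i,b+k) * y $ b)" by simp
    show "(B *\<^sub>v x) $ i = (\<mu> \<cdot>\<^sub>v x) $ i"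
    proof (cases "i < k")
      case True
      have "(\<Sum>b<n-k. B $$ (i,b+k) * y $ b) = 0"
        using D True i unfolding diag_upto_def by (intro sum.neutral, auto)
      then show ?thesis using eq True i xc unfolding x_def by simp
    next
      case False
      have "(\<Sum>b<n-k. B $$ (i,b+k) * y $ b) = (C *\<^sub>v y) $ (i - k)"
        using False i yc unfolding C_def by (simp add: scalar_prod_def lessThan_atLeast0)
      also have "\<dots> = \<mu> * y $ (i-k)" using Cy False i yc by simp
      finally show ?thesis using eq False i unfolding x_def by simp
    qed
  qed (insert xc B, simp)
  moreover have "\<forall>i<k. x $ i = 0" unfolding x_def using k by simp
  ultimately show ?thesis using xc x0 by blast
qed


lemma unitaryD: assumes "unitary n U"
  shows "U \<in> carrier_mat n n" "adj U * U = 1\<^sub>m n" "U * adj U = 1\<^sub>m n"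
  using assms unfolding unitary_def by auto

lemma sum_delta_mult: fixes f :: "nat \<Rightarrow> complex"
  shows "i < n \<Longrightarrow> (\<Sum>l<n. (if i = l then 1 else 0) * f l) = f i"
proof -
  assume i: "i < n"
  have "(\<Sum>l<n. (if i = l then 1 else 0) * f l) = (\<Sum>l<n. if l = i then f l else 0)"
    by (rule sum.cong) auto
  also have "\<dots> = f i" using i by simp
  finally show ?thesis .
qed

lemma sum_delta_mult': fixes f :: "nat \<Rightarrow> complex"
  shows "i < n \<Longrightarrow> (\<Sum>l<n. (if l = i then 1 else 0) * f l) = f i"
proof -
  assume i: "i < n"
  have "(\<Sum>l<n. (if l = i then 1 else 0) * f l) = (\<Sum>l<n. if l = i then f l else 0)"
    by (rule sum.cong) auto
  also have "\<dots> = f i" using i by simp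
  finally show ?thesis .
qed

lemma householder:
  fixes u :: "complex vec" and r :: real
  assumes uc: "u \<in> carrier_vec n" and k: "k < n"
    and un: "(\<Sum>i<n. (cmod (u$i))^2) = 1" and uk: "u$k = of_real r" and r: "r \<le> 0"
    and u0: "\<forall>j<k. u$j = 0"
  shows "\<exists>H. unitary n H \<and> adj H = H \<and> (\<forall>i<n. H$$(i,k) = u$i)
           \<and> (\<forall>i<n. \<forall>j<k. H$$(i,j) = (if i = j then 1 else 0))"
proof -
  define w where "w = vec n (\<lambda>i. (if i = k then 1 else 0) - u$i)"
  define s where "s = (\<Sum>i<n. (cmod (w$i))^2)"
  have wk: "w$k = of_real (1 - r)" unfolding w_def using k uk by simp
  have wi: "i < n \<Longrightarrow> i \<noteq> k \<Longrightarrow> w$i = - u$i" for i unfolding w_def by simp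
  have kin: "k \<in> {..<n}" using k by simp
  have wk2: "(cmod (w$k))^2 = (1-r)^2" using wk by (simp only: norm_of_real power2_abs)
  have uk2: "(cmod (u$k))^2 = r^2" using uk by (simp only: norm_of_real power2_abs)
  have "s = (cmod (w$k))^2 + (\<Sum>i\<in>{..<n}-{k}. (cmod (w$i))^2)"
    unfolding s_def by (subst sum.remove[OF _ kin], auto)
  also have "(\<Sum>i\<in>{..<n}-{k}. (cmod (w$i))^2) = (\<Sum>i\<in>{..<n}-{k}. (cmod (u$i))^2)"
    by (intro sum.cong, auto simp: wi)
  also have "\<dots> = 1 - r^2"
    using un uk2 by (subst (asm) sum.remove[OF _ kin], auto)
  finally have s: "s = 2 - 2 * r" using wk2 by (simp add: power2_eq_square algebra_simps)
  with r have spos: "s > 0" by simp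
  define c where "c = 2 / s"
  have cs: "c * s = 2" unfolding c_def using spos by simp
  have c1r: "c * (1 - r) = 1" unfolding c_def s using r by (simp add: field_simps)
  define H where "H = Matrix.mat n n (\<lambda>(i,j). (if i = j then 1 else 0) - of_real c * w$i * cnj (w$j))"
  have Hc: "H \<in> carrier_mat n n" unfolding H_def by simp
  have Hij: "i < n \<Longrightarrow> j < n \<Longrightarrow> H$$(i,j) = (if i = j then 1 else 0) - of_real c * w$i * cnj (w$j)" for i j
    unfolding H_def by simp
  have adjH: "adj H = H"
    by (rule eq_matI, insert Hc, auto simp: Hij)
  have sw: "(\<Sum>l<n. cnj (w$l) * w$l) = of_real s"
    unfolding s_def of_real_sum by (intro sum.cong refl, metis complex_norm_square mult.commute)
  have HH: "H * H = 1\<^sub>m n"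
  proof (rule eq_matI)
    fix i j assume "i < dim_row (1\<^sub>m n)" "j < dim_col (1\<^sub>m n)"
    then have i: "i < n" and j: "j < n" by auto
    have "(H * H) $$ (i,j) = (\<Sum>l<n. H$$(i,l) * H$$(l,j))" by (rule mult_entry[OF Hc Hc i j])
    also have "\<dots> = (\<Sum>l<n. (if i = l then 1 else 0) * (if l = j then 1 else 0)
         - of_real c * w$i * ((if l = j then 1 else 0) * cnj (w$l))
         - of_real c * cnj (w$j) * ((if i = l then 1 else 0) * w$l)
         + of_real c * of_real c * w$i * cnj (w$j) * (cnj (w$l) * w$l))"
      by (intro sum.cong refl, auto simp: Hij i j algebra_simps)
    also have "\<dots> = (\<Sum>l<n. (if i = l then 1 else 0) * (if l = j then 1 else 0))
         - of_real c * w$i * (\<Sum>l<n. (if l = j then 1 else 0) * cnj (w$l))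
         - of_real c * cnj (w$j) * (\<Sum>l<n. (if i = l then 1 else 0) * w$l)
         + of_real c * of_real c * w$i * cnj (w$j) * (\<Sum>l<n. cnj (w$l) * w$l)"
      by (simp add: sum.distrib sum_subtractf sum_distrib_left)
    also have "\<dots> = (if i = j then 1 else 0) - of_real c * w$i * cnj (w$j)
         - of_real c * cnj (w$j) * w$i + of_real c * of_real c * w$i * cnj (w$j) * of_real s"
      using i j by (simp only: sum_delta_mult[OF i] sum_delta_mult'[OF j] sw)
    also have "\<dots> = (if i = j then 1 else 0) + w$i * cnj (w$j) * (of_real (c * s) - 2) * of_real c"
      by (simp add: algebra_simps)
    also have "\<dots> = 1\<^sub>m n $$ (i,j)" using cs i j by simp
    finally show "(H * H) $$ (i,j) = 1\<^sub>m n $$ (i,j)" .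
  qed (insert Hc, auto)
  have "unitary n H" unfolding unitary_def using Hc adjH HH by simp
  moreover have "\<forall>i<n. H$$(i,k) = u$i"
  proof (intro allI impI)
    fix i assume i: "i < n"
    have "H$$(i,k) = (if i = k then 1 else 0) - w$i * of_real (c * (1 - r))"
      using i k by (simp add: Hij wk)
    also have "\<dots> = u$i" using c1r i unfolding w_def by simp
    finally show "H$$(i,k) = u$i" .
  qed
  moreover have "\<forall>i<n. \<forall>j<k. H$$(i,j) = (if i = j then 1 else 0)"
  proof (intro allI impI)
    fix i j assume i: "i < n" and j: "j < k"
    have "w$j = 0" using wi[of j] u0 j k by simp
    then show "H$$(i,j) = (if i = j then 1 else 0)" using i j k by (simp add: Hij)
  qed
  ultimately show ?thesis using adjH by blast
qed


lemma hermitianD: "hermitian n A \<Longrightarrow> A \<in> carrier_mat n n" "hermitian n A \<Longrightarrow> adj A = A"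
  unfolding hermitian_def by auto

lemma hermitian_conj: assumes A: "hermitian n A" and U: "U \<in> carrier_mat n n"
  shows "hermitian n (adj U * A * U)"
proof -
  have Ac: "A \<in> carrier_mat n n" and aA: "adj A = A" using A by (auto simp: hermitian_def)
  have "adj (adj U * A * U) = adj U * adj (adj U * A)"
    using U Ac by (subst adj_mult[of _ n n _ n], auto)
  also have "adj (adj U * A) = adj A * U" using U Ac by (subst adj_mult[of _ n n _ n], auto)
  finally have "adj (adj U * A * U) = adj U * A * U" using aA U Ac assoc_mult_mat[OF adj_carrier[OF U] Ac U] by simp
  then show ?thesis unfolding hermitian_def using U Ac by auto
qed

lemma spectral_step: fixes B :: "complex mat"
  assumes hB: "hermitian n B" and D: "diag_upto n k B" and k: "k < n"
  shows "\<exists>H. unitary n H \<and> diag_upto n (Suc k) (adj H * B * H)"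
proof -
  have Bc: "B \<in> carrier_mat n n" and aB: "adj B = B" using hB by (auto simp: hermitian_def)
  obtain x \<mu> where xc: "x \<in> carrier_vec n" and x0: "x \<noteq> 0\<^sub>v n" and xz: "\<forall>i<k. x $ i = 0"
    and Bx: "B *\<^sub>v x = \<mu> \<cdot>\<^sub>v x"
    using eigvec_sub[OF Bc D k] by blast
  define N where "N = (\<Sum>i<n. (cmod (x$i))^2)"
  obtain i0 where i0: "i0 < n" "x$i0 \<noteq> 0"
  proof -
    have "\<exists>i<n. x$i \<noteq> 0"
    proof (rule ccontr)
      assume "\<not> (\<exists>i<n. x$i \<noteq> 0)"
      then have "x = 0\<^sub>v n" using xc by (intro eq_vecI, auto)
      then show False using x0 by simp
    qed
    then show ?thesis using that by blast
  qed
  have "(cmod (x$i0))^2 \<le> N" unfolding N_def by (rule member_le_sum, insert i0, auto)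
  moreover have "(cmod (x$i0))^2 > 0" using i0 by simp
  ultimately have Npos: "N > 0" by linarith
  define ph where "ph = (if x$k = 0 then 1 else cnj (x$k) / of_real (cmod (x$k)))"
  have ph1: "cmod ph = 1" unfolding ph_def by (auto simp: norm_divide)
  have phx: "ph * x$k = of_real (cmod (x$k))"
  proof (cases "x$k = 0")
    case False
    have "ph * x$k = (cnj (x$k) * x$k) / of_real (cmod (x$k))" unfolding ph_def using False by simp
    also have "cnj (x$k) * x$k = of_real ((cmod (x$k))^2)" by (metis complex_norm_square mult.commute)
    finally show ?thesis using False by (simp add: power2_eq_square)
  qed (simp add: ph_def)
  define \<alpha> where "\<alpha> = - ph / of_real (sqrt N)"
  have a2: "(cmod \<alpha>)^2 = 1 / N" unfolding \<alpha>_def using Npos ph1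
    by (simp add: norm_divide power_divide)
  define u where "u = \<alpha> \<cdot>\<^sub>v x"
  have uc: "u \<in> carrier_vec n" unfolding u_def using xc by simp
  have ui: "i < n \<Longrightarrow> u$i = \<alpha> * x$i" for i unfolding u_def using xc by simp
  have u0: "\<forall>j<k. u$j = 0" using ui xz k by simp
  have Bu: "B *\<^sub>v u = \<mu> \<cdot>\<^sub>v u" unfolding u_def
    by (simp add: mult_mat_vec[OF Bc xc] Bx smult_smult_assoc mult.commute)
  have un: "(\<Sum>i<n. (cmod (u$i))^2) = 1"
  proof -
    have "(\<Sum>i<n. (cmod (u$i))^2) = (\<Sum>i<n. (cmod \<alpha>)^2 * (cmod (x$i))^2)"
      by (intro sum.cong refl, simp add: ui norm_mult power_mult_distrib)
    also have "\<dots> = (cmod \<alpha>)^2 * N" unfolding N_def by (simp add: sum_distrib_left)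
    finally show ?thesis using a2 Npos by simp
  qed
  define r where "r = - cmod (x$k) / sqrt N"
  have r: "r \<le> 0" unfolding r_def using Npos by simp
  have uk: "u$k = of_real r"
  proof -
    have "u$k = - (ph * x$k) / of_real (sqrt N)" using ui[OF k] unfolding \<alpha>_def by simp
    also have "\<dots> = of_real r" unfolding phx r_def by simp
    finally show ?thesis .
  qed
  obtain H where uH: "unitary n H" and aH: "adj H = H" and Hk: "\<forall>i<n. H$$(i,k) = u$i"
    and Hj: "\<forall>i<n. \<forall>j<k. H$$(i,j) = (if i = j then 1 else 0)"
    using householder[OF uc k un uk r u0] by blast
  have Hc: "H \<in> carrier_mat n n" and HH: "H * H = 1\<^sub>m n" using uH aH unfolding unitary_def by auto
  define B' where "B' = adj H * B * H"
  have hB': "hermitian n B'" unfolding B'_def by (rule hermitian_conj[OF hB Hc])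
  have BH: "\<exists>lam. \<forall>a<n. (B * H) $$ (a,j) = lam * H $$ (a,j)" if j: "j < Suc k" for j
  proof (cases "j = k")
    case True
    have "(B * H) $$ (a,k) = \<mu> * H $$ (a,k)" if a: "a < n" for a
    proof -
      have "(B * H) $$ (a,k) = (\<Sum>l<n. B$$(a,l) * u$l)"
        using mult_entry[OF Bc Hc a k] Hk by simp
      also have "\<dots> = (B *\<^sub>v u) $ a" using a Bc uc by (simp add: scalar_prod_def lessThan_atLeast0)
      also have "\<dots> = \<mu> * u $ a" using Bu a uc by simp
      finally show ?thesis using Hk a by simp
    qed
    then show ?thesis using True by blast
  next
    case False
    then have jk: "j < k" using j by simp
    have "(B * H) $$ (a,j) = B $$ (j,j) * H $$ (a,j)" if a: "a < n" for a
    proof -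
      have "(B * H) $$ (a,j) = (\<Sum>l<n. B$$(a,l) * (if l = j then 1 else 0))"
        using mult_entry[OF Bc Hc a] jk k Hj by simp
      also have "\<dots> = B $$ (a,j)" using jk k sum_delta_mult'[of j n "\<lambda>l. B $$ (a,l)"] by (simp add: mult.commute)
      also have "\<dots> = B $$ (j,j) * H $$ (a,j)"
        using D a jk k Hj unfolding diag_upto_def by auto
      finally show ?thesis .
    qed
    then show ?thesis by blast
  qed
  have low: "B' $$ (i,j) = 0" if i: "i < n" and j: "j < n" and ij: "i \<noteq> j" and jk: "j < Suc k" for i j
  proof -
    obtain lam where lam: "\<forall>a<n. (B * H) $$ (a,j) = lam * H $$ (a,j)" using BH[OF jk] by blast
    have "B' = H * (B * H)" unfolding B'_def aH using Hc Bc by simp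
    then have "B' $$ (i,j) = (\<Sum>a<n. H$$(i,a) * (B * H) $$ (a,j))"
      using mult_entry[of H n n "B * H" n i j] Hc Bc i j by simp
    also have "\<dots> = lam * (\<Sum>a<n. H$$(i,a) * H $$ (a,j))"
      using lam by (simp add: sum_distrib_left algebra_simps)
    also have "(\<Sum>a<n. H$$(i,a) * H $$ (a,j)) = (H * H) $$ (i,j)"
      using mult_entry[OF Hc Hc i j] by simp
    also have "\<dots> = 0" using HH i j ij by simp
    finally show ?thesis by simp
  qed
  have "diag_upto n (Suc k) B'"
    unfolding diag_upto_def
  proof (intro allI impI)
    fix i j assume i: "i < n" and j: "j < n" and ij: "i \<noteq> j" and ik: "i < Suc k \<or> j < Suc k"
    show "B' $$ (i,j) = 0"
    proof (cases "j < Suc k")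
      case True then show ?thesis using low i j ij by blast
    next
      case False
      then have "i < Suc k" using ik by simp
      then have "B' $$ (j,i) = 0" using low i j ij by blast
      moreover have "B' $$ (i,j) = cnj (B' $$ (j,i))"
      proof -
        have "B' \<in> carrier_mat n n" "adj B' = B'" using hB' unfolding hermitian_def by auto
        then have "B' $$ (i,j) = adj B' $$ (i,j)" by simp
        also have "\<dots> = cnj (B' $$ (j,i))" using \<open>B' \<in> carrier_mat n n\<close> i j by simp
        finally show ?thesis .
      qed
      ultimately show ?thesis by simp
    qed
  qed
  then show ?thesis using uH unfolding B'_def by blast
qed

lemma unitary_mult: assumes "unitary n U" "unitary n V" shows "unitary n (U * V)"
proof -
  have U: "U \<in> carrier_mat n n" "adj U * U = 1\<^sub>m n" "U * adj U = 1\<^sub>m n" using unitaryD[OF assms(1)] by auto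
  have V: "V \<in> carrier_mat n n" "adj V * V = 1\<^sub>m n" "V * adj V = 1\<^sub>m n" using unitaryD[OF assms(2)] by auto
  have a: "adj (U * V) = adj V * adj U" using U V by (simp add: adj_mult)
  have "adj V * adj U * (U * V) = adj V * (adj U * (U * V))" using U V
    by (simp add: sq_assoc[of _ n])
  also have "\<dots> = 1\<^sub>m n" using U V by (simp add: assoc_one[of _ n])
  finally have 1: "adj (U * V) * (U * V) = 1\<^sub>m n" using a by simp
  have "U * V * (adj V * adj U) = U * (V * (adj V * adj U))" using U V
    by (simp add: sq_assoc[of _ n])
  also have "V * (adj V * adj U) = adj U" using U V assoc_one[of V n "adj V" "adj U" n] by simp
  also have "U * adj U = 1\<^sub>m n" using U by simp
  finally have 2: "U * V * adj (U * V) = 1\<^sub>m n" using a by simp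
  show ?thesis unfolding unitary_def using 1 2 U V by auto
qed

lemma spectral_upto: assumes hA: "hermitian n A" and kn: "k \<le> n"
  shows "\<exists>U. unitary n U \<and> diag_upto n k (adj U * A * U)"
  using kn
proof (induction k)
  case 0
  have "unitary n (1\<^sub>m n)" unfolding unitary_def by simp
  moreover have "diag_upto n 0 (adj (1\<^sub>m n) * A * 1\<^sub>m n)" unfolding diag_upto_def by simp
  ultimately show ?case by blast
next
  case (Suc k)
  then obtain U where U: "unitary n U" and D: "diag_upto n k (adj U * A * U)" by auto
  have Uc: "U \<in> carrier_mat n n" using U unitaryD by auto
  have Ac: "A \<in> carrier_mat n n" using hA hermitianD by auto
  obtain H where H: "unitary n H" and D': "diag_upto n (Suc k) (adj H * (adj U * A * U) * H)"
    using spectral_step[OF hermitian_conj[OF hA Uc] D] Suc by auto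
  have Hc: "H \<in> carrier_mat n n" using H unitaryD by auto
  have "adj (U * H) * A * (U * H) = adj H * (adj U * A * U) * H"
    using Uc Hc Ac by (simp add: adj_mult[OF Uc Hc] sq_assoc[of _ n])
  then show ?case using unitary_mult[OF U H] D' by metis
qed

theorem spectral: assumes hA: "hermitian n A"
  shows "\<exists>U (d::nat \<Rightarrow> real). unitary n U \<and> A = U * mat_diag n (\<lambda>i. complex_of_real (d i)) * adj U"
proof -
  obtain U where U: "unitary n U" and D: "diag_upto n n (adj U * A * U)"
    using spectral_upto[OF hA le_refl] by blast
  have Uc: "U \<in> carrier_mat n n" and UU: "adj U * U = 1\<^sub>m n" "U * adj U = 1\<^sub>m n" using unitaryD[OF U] by auto
  have Ac: "A \<in> carrier_mat n n" using hA hermitianD by auto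
  define B where "B = adj U * A * U"
  have hB: "hermitian n B" unfolding B_def by (rule hermitian_conj[OF hA Uc])
  have Bc: "B \<in> carrier_mat n n" using hB hermitianD by auto
  define d where "d i = Re (B $$ (i,i))" for i
  have "B = mat_diag n (\<lambda>i. complex_of_real (d i))"
  proof (rule eq_matI)
    fix i j assume "i < dim_row (mat_diag n (\<lambda>i. complex_of_real (d i)))" "j < dim_col (mat_diag n (\<lambda>i. complex_of_real (d i)))"
    then have i: "i < n" and j: "j < n" by (auto simp: mat_diag_def)
    show "B $$ (i,j) = mat_diag n (\<lambda>i. complex_of_real (d i)) $$ (i,j)"
    proof (cases "i = j")
      case True
      have "cnj (B $$ (i,i)) = B $$ (i,i)"
      proof -
        have "B $$ (i,i) = adj B $$ (i,i)" using hB unfolding hermitian_def by simp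
        also have "\<dots> = cnj (B $$ (i,i))" using Bc i by simp
        finally show ?thesis by simp
      qed
      note cc = this
      have "Im (B $$ (i,i)) = 0" using arg_cong[OF cc, of Im] by simp
      then have "B $$ (i,i) = of_real (Re (B $$ (i,i)))" by (simp add: complex_eq_iff)
      then show ?thesis using True i unfolding d_def mat_diag_def by simp
    next
      case False
      then show ?thesis using D i j unfolding diag_upto_def B_def mat_diag_def by simp
    qed
  qed (insert Bc, auto simp: mat_diag_def)
  moreover have "U * B * adj U = A"
  proof -
    have "U * B * adj U = (U * adj U) * A * (U * adj U)" unfolding B_def using Uc Ac
      by (simp add: sq_assoc[of _ n])
    then show ?thesis using UU Ac by simp
  qed
  ultimately show ?thesis using U by blast
qed


lemma unitary_cancel:
  assumes "unitary n U"
  shows "Y \<in> carrier_mat n n \<Longrightarrow> U * (adj U * Y) = Y"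
    and "Y \<in> carrier_mat n n \<Longrightarrow> adj U * (U * Y) = Y"
    and "U * adj U = 1\<^sub>m n" and "adj U * U = 1\<^sub>m n"
    and "U \<in> carrier_mat n n" and "adj U \<in> carrier_mat n n"
  using assoc_one[of U n "adj U" Y n] assoc_one[of "adj U" n U Y n] unitaryD[OF assms] by auto

lemma diag_commute:
  fixes a b :: "nat \<Rightarrow> real" and f :: "real \<Rightarrow> complex"
  assumes M: "M \<in> carrier_mat n n"
    and eq: "mat_diag n (\<lambda>i. complex_of_real (a i)) * M = M * mat_diag n (\<lambda>i. complex_of_real (b i))"
  shows "mat_diag n (\<lambda>i. f (a i)) * M = M * mat_diag n (\<lambda>i. f (b i))"
proof -
  have e: "complex_of_real (a i) * M $$ (i,j) = M $$ (i,j) * complex_of_real (b j)" if "i < n" "j < n" for i j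
  proof -
    have "(mat_diag n (\<lambda>i. complex_of_real (a i)) * M) $$ (i,j) = (M * mat_diag n (\<lambda>i. complex_of_real (b i))) $$ (i,j)"
      using eq by simp
    then show ?thesis using that M by (simp add: mat_diag_mult_left[OF M] mat_diag_mult_right[OF M])
  qed
  have "f (a i) * M $$ (i,j) = M $$ (i,j) * f (b j)" if "i < n" "j < n" for i j
  proof (cases "M $$ (i,j) = 0")
    case False
    then have "complex_of_real (a i) = complex_of_real (b j)" using e[OF that] by (simp add: mult.commute)
    then have "a i = b j" by simp
    then show ?thesis by (simp add: mult.commute)
  qed simp
  then show ?thesis using M by (intro eq_matI, auto simp: mat_diag_mult_left[OF M] mat_diag_mult_right[OF M])
qed

lemma matfun_eq:
  fixes d :: "nat \<Rightarrow> real"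
  assumes U: "unitary n U" and A: "A = U * mat_diag n (\<lambda>i. complex_of_real (d i)) * adj U"
  shows "matfun n f A = U * mat_diag n (\<lambda>i. f (d i)) * adj U"
proof -
  let ?P = "\<lambda>B. \<exists>V (d'::nat \<Rightarrow> real). unitary n V
      \<and> A = V * mat_diag n (\<lambda>i. complex_of_real (d' i)) * adj V
      \<and> B = V * mat_diag n (\<lambda>i. f (d' i)) * adj V"
  have ex: "\<exists>B. ?P B" using U A by blast
  have "?P (matfun n f A)" unfolding matfun_def using someI_ex[OF ex] by simp
  then obtain V d' where V: "unitary n V" and A': "A = V * mat_diag n (\<lambda>i. complex_of_real (d' i)) * adj V"
    and B: "matfun n f A = V * mat_diag n (\<lambda>i. f (d' i)) * adj V" by blast
  note u1 = unitary_cancel[OF U] and u2 = unitary_cancel[OF V]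
  define D where "D = mat_diag n (\<lambda>i. complex_of_real (d i))"
  define D' where "D' = mat_diag n (\<lambda>i. complex_of_real (d' i))"
  define F where "F = mat_diag n (\<lambda>i. f (d i))"
  define F' where "F' = mat_diag n (\<lambda>i. f (d' i))"
  have Dc: "D \<in> carrier_mat n n" "D' \<in> carrier_mat n n" "F \<in> carrier_mat n n" "F' \<in> carrier_mat n n"
    unfolding D_def D'_def F_def F'_def by auto
  define M where "M = adj V * U"
  have Mc: "M \<in> carrier_mat n n" unfolding M_def using u1 u2 by simp
  have Ac: "A \<in> carrier_mat n n" using A u1 Dc unfolding D_def by simp
  have e1: "adj V * A = D' * adj V" using A' Dc u2 unfolding D'_def by (simp add: sq_assoc[of _ n])
  have e2: "A * U = U * D" using A Dc u1 unfolding D_def by (simp add: sq_assoc[of _ n])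
  have "D' * M = (D' * adj V) * U" unfolding M_def using u1 u2 Dc by (simp add: sq_assoc[of _ n])
  also have "\<dots> = adj V * (A * U)" unfolding e1[symmetric] using u1 u2 Ac by (simp add: sq_assoc[of _ n])
  also have "\<dots> = M * D" unfolding e2 M_def using u1 u2 Dc by (simp add: sq_assoc[of _ n])
  finally have "D' * M = M * D" .
  then have FM: "F' * M = M * F" unfolding D'_def D_def F_def F'_def
    by (rule diag_commute[OF Mc])
  have "V * F' * adj V = V * F' * (M * adj U)" unfolding M_def using u1 u2 by (simp add: sq_assoc[of _ n])
  also have "\<dots> = V * (F' * M) * adj U" using u1 u2 Dc Mc by (simp add: sq_assoc[of _ n])
  also have "\<dots> = V * (M * F) * adj U" using FM by simp
  also have "\<dots> = U * F * adj U" unfolding M_def using u1 u2 Dc by (simp add: sq_assoc[of _ n])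
  finally show ?thesis using B unfolding F_def F'_def by simp
qed


definition fU :: "nat \<Rightarrow> complex mat \<Rightarrow> (nat \<Rightarrow> complex) \<Rightarrow> complex mat" where
  "fU n U \<phi> = U * mat_diag n \<phi> * adj U"

lemma conj_mult: assumes U: "unitary n U" and A: "A \<in> carrier_mat n n" and B: "B \<in> carrier_mat n n"
  shows "U * A * adj U * (U * B * adj U) = U * (A * B) * adj U"
  using A B unitary_cancel[OF U] by (simp add: sq_assoc[of _ n])

lemma fU_carrier[simp]: "unitary n U \<Longrightarrow> fU n U \<phi> \<in> carrier_mat n n"
  unfolding fU_def using unitary_cancel by simp

lemma fU_mult: "unitary n U \<Longrightarrow> fU n U \<phi> * fU n U \<psi> = fU n U (\<lambda>i. \<phi> i * \<psi> i)"
  unfolding fU_def by (simp add: conj_mult)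

lemma fU_comm: "unitary n U \<Longrightarrow> fU n U \<phi> * fU n U \<psi> = fU n U \<psi> * fU n U \<phi>"
  by (simp add: fU_mult mult.commute)

lemma fU_adj: "unitary n U \<Longrightarrow> adj (fU n U \<phi>) = fU n U (\<lambda>i. cnj (\<phi> i))"
  unfolding fU_def using unitary_cancel
  by (simp add: adj_mult[of _ n n _ n] adj_diag sq_assoc[of _ n])

lemma fU_one: "unitary n U \<Longrightarrow> fU n U (\<lambda>i. 1) = 1\<^sub>m n"
proof -
  assume U: "unitary n U"
  have "U * 1\<^sub>m n = U" using unitary_cancel(5)[OF U] by (rule right_mult_one_mat)
  then show ?thesis unfolding fU_def using unitary_cancel[OF U] by simp
qed

lemma fU_smult: "unitary n U \<Longrightarrow> c \<cdot>\<^sub>m fU n U \<phi> = fU n U (\<lambda>i. c * \<phi> i)"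
proof -
  assume U: "unitary n U"
  have "c \<cdot>\<^sub>m mat_diag n \<phi> = mat_diag n (\<lambda>i. c * \<phi> i)" by (intro eq_matI, auto simp: mat_diag_def)
  have Uc: "U \<in> carrier_mat n n" "adj U \<in> carrier_mat n n" using unitary_cancel[OF U] by auto
  have "c \<cdot>\<^sub>m (U * mat_diag n \<phi> * adj U) = (c \<cdot>\<^sub>m (U * mat_diag n \<phi>)) * adj U"
    using Uc by (simp add: mult_smult_assoc_mat[of _ n n _ n])
  also have "c \<cdot>\<^sub>m (U * mat_diag n \<phi>) = U * (c \<cdot>\<^sub>m mat_diag n \<phi>)"
    using Uc by (simp add: mult_smult_distrib[of _ n n _ n])
  finally show ?thesis unfolding fU_def using \<open>c \<cdot>\<^sub>m mat_diag n \<phi> = _\<close> by simp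
qed

lemma fU_trace: "unitary n U \<Longrightarrow> mtrace (fU n U \<phi>) = (\<Sum>i<n. \<phi> i)"
proof -
  assume U: "unitary n U"
  have "mtrace (fU n U \<phi>) = mtrace (U * mat_diag n \<phi> * adj U)" unfolding fU_def ..
  also have "\<dots> = mtrace (adj U * (U * mat_diag n \<phi>))"
    by (rule mtrace_comm[of _ n n], insert unitary_cancel[OF U], auto)
  also have "\<dots> = mtrace (mat_diag n \<phi>)" using unitary_cancel[OF U] by simp
  finally show ?thesis by (simp add: mtrace_diag)
qed

lemma fU_unitary: "unitary n U \<Longrightarrow> (\<And>i. cnj (\<phi> i) * \<phi> i = 1) \<Longrightarrow> unitary n (fU n U \<phi>)"
proof -
  assume U: "unitary n U" and p: "\<And>i. cnj (\<phi> i) * \<phi> i = 1"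
  have 1: "adj (fU n U \<phi>) * fU n U \<phi> = 1\<^sub>m n" using U p by (simp add: fU_adj fU_mult fU_one)
  have 2: "fU n U \<phi> * adj (fU n U \<phi>) = 1\<^sub>m n" using U p by (simp add: fU_adj fU_mult fU_one mult.commute)
  show ?thesis unfolding unitary_def using 1 2 U by simp
qed

lemma fU_hermitian: "unitary n U \<Longrightarrow> hermitian n (fU n U (\<lambda>i. complex_of_real (r i)))"
  unfolding hermitian_def by (simp add: fU_adj)

lemma matfun_fU: "unitary n U \<Longrightarrow> A = fU n U (\<lambda>i. complex_of_real (d i)) \<Longrightarrow>
   matfun n f A = fU n U (\<lambda>i. f (d i))"
  unfolding fU_def by (rule matfun_eq)

lemma fU_conj: assumes W: "unitary n W" and V: "unitary n V"
  shows "fU n (W * V) \<phi> = W * fU n V \<phi> * adj W"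
  unfolding fU_def using unitary_cancel[OF W] unitary_cancel[OF V]
  by (simp add: adj_mult[of _ n n _ n] sq_assoc[of _ n])

lemma spectral_fU: "hermitian n A \<Longrightarrow> \<exists>U (d::nat\<Rightarrow>real). unitary n U \<and> A = fU n U (\<lambda>i. complex_of_real (d i))"
  unfolding fU_def by (rule spectral)


lemma comm_cancel: assumes W: "unitary n W" and S: "S \<in> carrier_mat n n" and SW: "S * W = W * S"
  and Z: "Z \<in> carrier_mat n n"
  shows "adj W * (S * (W * Z)) = S * Z"
proof -
  note w = unitary_cancel[OF W]
  have "S * (W * Z) = (S * W) * Z" using S Z w by (simp add: sq_assoc[of _ n])
  also have "\<dots> = W * (S * Z)" unfolding SW using S Z w by (simp add: sq_assoc[of _ n])
  finally have "S * (W * Z) = W * (S * Z)" .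
  then show ?thesis using w S Z by simp
qed

lemma kms_inv_gen: assumes W: "unitary n W" and S: "S \<in> carrier_mat n n" and SW: "S * W = W * S"
  and X: "X \<in> carrier_mat n n" and Y: "Y \<in> carrier_mat n n"
  shows "mtrace (S * adj (W * X * adj W) * S * (W * Y * adj W)) = mtrace (S * adj X * S * Y)"
proof -
  note w = unitary_cancel[OF W] and cc = comm_cancel[OF W S SW]
  have a: "adj (W * X * adj W) = W * adj X * adj W" using w X
    by (simp add: adj_mult[of _ n n _ n] sq_assoc[of _ n])
  have "S * adj (W * X * adj W) * S * (W * Y * adj W) = (S * W * adj X * S * Y) * adj W"
    unfolding a using w X Y S by (simp add: sq_assoc[of _ n] cc)
  also have "mtrace \<dots> = mtrace (adj W * (S * W * adj X * S * Y))"
    by (rule mtrace_comm[of _ n n], insert w X Y S, auto)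
  also have "adj W * (S * W * adj X * S * Y) = S * adj X * S * Y"
    using w X Y S by (simp add: sq_assoc[of _ n] cc)
  finally show ?thesis .
qed


locale hset =
  fixes n :: nat and H :: "complex mat" and \<beta> :: real and U :: "complex mat" and d :: "nat \<Rightarrow> real"
  assumes U: "unitary n U" and Hd: "H = fU n U (\<lambda>i. complex_of_real (d i))" and npos: "n > 0"
begin

definition Zs where "Zs = (\<Sum>j<n. exp (- \<beta> * d j))"
definition p where "p i = exp (- \<beta> * d i) / Zs"
definition S where "S = fU n U (\<lambda>i. complex_of_real (sqrt (p i)))"
definition Si where "Si = fU n U (\<lambda>i. complex_of_real (1 / sqrt (p i)))"
definition LR where "LR = fU n U (\<lambda>i. complex_of_real (ln (p i)))"
definition W where "W t = fU n U (\<lambda>i. exp (\<i> * complex_of_real (t * d i)))"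
definition Wa where "Wa t = fU n U (\<lambda>i. exp (- \<i> * complex_of_real (t * d i)))"

lemma Zpos: "Zs > 0"
proof -
  have "0 \<in> {..<n}" using npos by simp
  then have "exp (- \<beta> * d 0) \<le> Zs" unfolding Zs_def by (intro member_le_sum, auto)
  moreover have "exp (- \<beta> * d 0) > 0" by simp
  ultimately show ?thesis by linarith
qed

lemma ppos: "p i > 0" unfolding p_def using Zpos by simp

lemma gibbs_eq: "gibbs n \<beta> H = fU n U (\<lambda>i. complex_of_real (p i))"
proof -
  have m: "matfun n (\<lambda>x. complex_of_real (exp (- \<beta> * x))) H = fU n U (\<lambda>i. complex_of_real (exp (- \<beta> * d i)))"
    by (rule matfun_fU[OF U Hd])
  have t: "mtrace (fU n U (\<lambda>i. complex_of_real (exp (- \<beta> * d i)))) = complex_of_real Zs"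
    unfolding Zs_def using U by (simp add: fU_trace)
  show ?thesis unfolding gibbs_def m t using U
    by (simp add: fU_smult p_def)
qed

lemma msqrt_rho: "msqrt n (gibbs n \<beta> H) = S"
  unfolding msqrt_def S_def by (rule matfun_fU[OF U gibbs_eq])

lemma mlog_rho: "mlog n (gibbs n \<beta> H) = LR"
  unfolding mlog_def LR_def by (rule matfun_fU[OF U gibbs_eq])

lemma carriers[simp]: "S \<in> carrier_mat n n" "Si \<in> carrier_mat n n" "LR \<in> carrier_mat n n"
  "W t \<in> carrier_mat n n" "Wa t \<in> carrier_mat n n" "gibbs n \<beta> H \<in> carrier_mat n n"
  "U \<in> carrier_mat n n" "adj U \<in> carrier_mat n n"
  unfolding S_def Si_def LR_def W_def Wa_def gibbs_eq using U unitary_cancel[OF U] by auto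

lemma S_Si: "S * Si = 1\<^sub>m n" "Si * S = 1\<^sub>m n"
proof -
  have "complex_of_real (sqrt (p i)) * complex_of_real (1 / sqrt (p i)) = 1" for i
  proof -
    have "sqrt (p i) > 0" using ppos[of i] by simp
    then have "sqrt (p i) * (1 / sqrt (p i)) = 1" by simp
    then show ?thesis by (metis of_real_1 of_real_mult)
  qed
  then show "S * Si = 1\<^sub>m n" "Si * S = 1\<^sub>m n" unfolding S_def Si_def using U
    by (simp_all add: fU_mult fU_one mult.commute)
qed

lemma Wa_adj: "adj (W t) = Wa t"
proof -
  have "cnj (exp (\<i> * complex_of_real (t * d i))) = exp (- \<i> * complex_of_real (t * d i))" for i
    by (simp add: exp_cnj)
  then show ?thesis unfolding W_def Wa_def using U by (simp add: fU_adj)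
qed

lemma W_unitary: "unitary n (W t)"
  unfolding W_def using U
  by (intro fU_unitary, auto simp: exp_cnj exp_add[symmetric])

lemma heis_eq0: "heis n H t X = W t * X * Wa t"
  unfolding heis_def W_def Wa_def
  by (simp add: matfun_fU[OF U Hd])

lemma heis_eq: "heis n H t X = W t * X * adj (W t)"
  unfolding heis_eq0 Wa_adj ..

lemma W0: "W 0 = 1\<^sub>m n" unfolding W_def using U by (simp add: fU_one)

lemma heis0: "X \<in> carrier_mat n n \<Longrightarrow> heis n H 0 X = X"
  unfolding heis_eq W0 by simp

lemma S_W: "S * W t = W t * S" unfolding S_def W_def using U by (rule fU_comm)
lemma Si_W: "Si * W t = W t * Si" unfolding Si_def W_def using U by (rule fU_comm)
lemma LR_W: "LR * W t = W t * LR" unfolding LR_def W_def using U by (rule fU_comm)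
lemma rho_W: "gibbs n \<beta> H * W t = W t * gibbs n \<beta> H" unfolding gibbs_eq W_def using U by (rule fU_comm)

lemma herm[simp]: "hermitian n S" "hermitian n Si" "hermitian n LR" "hermitian n (gibbs n \<beta> H)"
  unfolding S_def Si_def LR_def gibbs_eq by (rule fU_hermitian[OF U])+

lemma adjS[simp]: "adj S = S" "adj Si = Si" "adj LR = LR"
  using herm by (auto simp: hermitian_def)

lemma kms_eq: "kms n (gibbs n \<beta> H) X Y = mtrace (S * adj X * S * Y)"
  unfolding kms_def msqrt_rho ..

lemma kms_inv: "X \<in> carrier_mat n n \<Longrightarrow> Y \<in> carrier_mat n n \<Longrightarrow>
   kms n (gibbs n \<beta> H) (W t * X * adj (W t)) (W t * Y * adj (W t)) = kms n (gibbs n \<beta> H) X Y"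
  unfolding kms_eq by (rule kms_inv_gen[OF W_unitary carriers(1) S_W])

lemma conjW_one: "W t * 1\<^sub>m n * adj (W t) = 1\<^sub>m n"
  using unitary_cancel[OF W_unitary] by simp

lemma conjW_carrier[simp]: "X \<in> carrier_mat n n \<Longrightarrow> W t * X * adj (W t) \<in> carrier_mat n n"
  using unitary_cancel[OF W_unitary] by simp

lemma conjW_minus: "X \<in> carrier_mat n n \<Longrightarrow> Y \<in> carrier_mat n n \<Longrightarrow>
  W t * (X - Y) * adj (W t) = W t * X * adj (W t) - W t * Y * adj (W t)"
  using unitary_cancel[OF W_unitary]
  by (simp add: mult_minus_distrib_mat[of _ n n _ n] minus_mult_distrib_mat[of _ n n _ _ n])

lemma conjW_smult: "X \<in> carrier_mat n n \<Longrightarrow> W t * (c \<cdot>\<^sub>m X) * adj (W t) = c \<cdot>\<^sub>m (W t * X * adj (W t))"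
  using unitary_cancel[OF W_unitary]
  by (simp add: mult_smult_distrib[of _ n n _ n] mult_smult_assoc_mat[of _ n n _ n])

lemma conjW_adj: "X \<in> carrier_mat n n \<Longrightarrow> adj (W t * X * adj (W t)) = W t * adj X * adj (W t)"
  using unitary_cancel[OF W_unitary] by (simp add: adj_mult[of _ n n _ n] sq_assoc[of _ n])

lemma conjW_inj: "X \<in> carrier_mat n n \<Longrightarrow> Y \<in> carrier_mat n n \<Longrightarrow> W t * X * adj (W t) = W t * Y * adj (W t) \<Longrightarrow> X = Y"
proof -
  assume X: "X \<in> carrier_mat n n" and Y: "Y \<in> carrier_mat n n" and e: "W t * X * adj (W t) = W t * Y * adj (W t)"
  note w = unitary_cancel[OF W_unitary[of t]]
  have "adj (W t) * (W t * X * adj (W t)) * W t = adj (W t) * (W t * Y * adj (W t)) * W t" using e by simp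
  then show "X = Y" using X Y w by (simp add: sq_assoc[of _ n])
qed

end


lemma conv_fubini:
  fixes fd fd' g :: "real \<Rightarrow> real" and h e e' :: "real \<Rightarrow> complex"
  assumes fd_int: "integrable lborel fd" and fd_nn: "\<forall>r. fd r \<ge> 0"
    and fd'_int: "integrable lborel fd'" and fd'_nn: "\<forall>r. fd' r \<ge> 0"
    and g_nn: "\<forall>r. g r \<ge> 0" and g_meas: "g \<in> borel_measurable lborel"
    and semi: "\<forall>s. ennreal (fd s) = (\<integral>\<^sup>+ r. ennreal (g r * fd' (s - r)) \<partial>lborel)"
    and conv: "is_convolution fd h e" and conv': "is_convolution fd' h e'"
  shows "integrable lborel (\<lambda>u. complex_of_real (g u) * e' (- u))"
    and "e 0 = (LINT u|lborel. complex_of_real (g u) * e' (- u))"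
proof -
  have hm[measurable]: "h \<in> borel_measurable lborel" using conv unfolding is_convolution_def by simp
  have fdm[measurable]: "fd \<in> borel_measurable lborel" using fd_int by (rule borel_measurable_integrable)
  have fd'm[measurable]: "fd' \<in> borel_measurable lborel" using fd'_int by (rule borel_measurable_integrable)
  note g_meas[measurable]
  define F where "F u r = complex_of_real (g u * fd' (r - u)) * h (- r)" for u r
  have Fm[measurable]: "(\<lambda>(u,r). F u r) \<in> borel_measurable (lborel \<Otimes>\<^sub>M lborel)"
    unfolding F_def by measurable
  have normF: "norm (F u r) = g u * fd' (r - u) * norm (h (- r))" for u r
    unfolding F_def using g_nn fd'_nn by (simp add: norm_mult abs_mult)
  have c0: "integrable lborel (\<lambda>r. complex_of_real (fd r) * h (0 - r)) \<and>
     e 0 = (LINT r|lborel. complex_of_real (fd r) * h (0 - r))"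
    using conv unfolding is_convolution_def by blast
  then have e0: "e 0 = (LINT r|lborel. complex_of_real (fd r) * h (- r))"
    and ie0: "integrable lborel (\<lambda>r. complex_of_real (fd r) * h (- r))" by auto
  have inner_u: "(\<integral>\<^sup>+ u. ennreal (g u * fd' (r - u)) \<partial>lborel) = ennreal (fd r)" for r
    using semi by simp
  have "(\<integral>\<^sup>+ x. ennreal (norm ((\<lambda>(u,r). F u r) x)) \<partial>(lborel \<Otimes>\<^sub>M lborel))
      = (\<integral>\<^sup>+ r. (\<integral>\<^sup>+ u. ennreal (norm (F u r)) \<partial>lborel) \<partial>lborel)"
  proof -
    have "(\<integral>\<^sup>+ r. (\<integral>\<^sup>+ u. ennreal (norm (F u r)) \<partial>lborel) \<partial>lborel)
       = integral\<^sup>N (lborel \<Otimes>\<^sub>M lborel) (\<lambda>(u,r). ennreal (norm (F u r)))"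
    proof -
      have m: "(\<lambda>(u,r). ennreal (norm (F u r))) \<in> borel_measurable (lborel \<Otimes>\<^sub>M lborel)" by measurable
      show ?thesis using lborel_pair.nn_integral_snd[OF m] by simp
    qed
    moreover have "(\<lambda>x. ennreal (norm ((\<lambda>(u,r). F u r) x))) = (\<lambda>(u,r). ennreal (norm (F u r)))"
      by auto
    ultimately show ?thesis by simp
  qed
  also have "\<dots> = (\<integral>\<^sup>+ r. (\<integral>\<^sup>+ u. ennreal (g u * fd' (r - u)) \<partial>lborel) * ennreal (norm (h (- r))) \<partial>lborel)"
    unfolding normF using g_nn fd'_nn
    by (intro nn_integral_cong, subst nn_integral_multc[symmetric], measurable,
        intro nn_integral_cong, simp add: ennreal_mult)
  also have "\<dots> = (\<integral>\<^sup>+ r. ennreal (norm (complex_of_real (fd r) * h (- r))) \<partial>lborel)"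
    unfolding inner_u using fd_nn by (intro nn_integral_cong, simp add: norm_mult ennreal_mult)
  also have "\<dots> < \<infinity>" using ie0 unfolding integrable_iff_bounded by simp
  finally have intF: "integrable (lborel \<Otimes>\<^sub>M lborel) (\<lambda>(u,r). F u r)"
    by (intro integrableI_bounded Fm)
  have iu: "(LINT u|lborel. F u r) = complex_of_real (fd r) * h (- r)" for r
  proof -
    have "(LINT u|lborel. g u * fd' (r - u)) = enn2real (\<integral>\<^sup>+ u. ennreal (g u * fd' (r - u)) \<partial>lborel)"
      by (rule integral_eq_nn_integral, measurable, insert g_nn fd'_nn, auto)
    also have "\<dots> = fd r" unfolding inner_u using fd_nn by simp
    finally have i: "(LINT u|lborel. g u * fd' (r - u)) = fd r" .
    have "(LINT u|lborel. F u r) = (LINT u|lborel. complex_of_real (g u * fd' (r - u))) * h (- r)"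
      unfolding F_def by (rule integral_mult_left_zero)
    also have "(LINT u|lborel. complex_of_real (g u * fd' (r - u))) = complex_of_real (LINT u|lborel. g u * fd' (r - u))"
      by (rule integral_complex_of_real)
    finally show ?thesis unfolding i .
  qed
  have ir: "(LINT r|lborel. F u r) = complex_of_real (g u) * e' (- u)" for u
  proof -
    have "(LINT r|lborel. F u r) = complex_of_real (g u) * (LINT r|lborel. complex_of_real (fd' (r - u)) * h (- r))"
      unfolding F_def by (simp add: mult.assoc)
    also have "(LINT r|lborel. complex_of_real (fd' (r - u)) * h (- r))
        = \<bar>1::real\<bar> *\<^sub>R (LINT x|lborel. complex_of_real (fd' ((u + 1 * x) - u)) * h (- (u + 1 * x)))"
      by (rule lborel_integral_real_affine, simp)
    also have "\<dots> = (LINT x|lborel. complex_of_real (fd' x) * h (- u - x))" by simp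
    also have "\<dots> = e' (- u)" using conv' unfolding is_convolution_def by simp
    finally show ?thesis .
  qed
  show "integrable lborel (\<lambda>u. complex_of_real (g u) * e' (- u))"
    using lborel_pair.integrable_fst[of F, OF intF] unfolding ir .
  have "(LINT r|lborel. (LINT u|lborel. F u r)) = (LINT u|lborel. (LINT r|lborel. F u r))"
    by (rule lborel_pair.Fubini_integral[OF intF])
  then show "e 0 = (LINT u|lborel. complex_of_real (g u) * e' (- u))"
    unfolding iu ir e0 .
qed


lemma ereal_bound:
  fixes g h :: "real \<Rightarrow> real" and c :: ereal
  assumes g_nn: "\<forall>r. g r \<ge> 0" and gm: "g \<in> borel_measurable lborel"
    and int: "integrable lborel (\<lambda>u. g u * h u)" and hc: "\<forall>u. c \<le> ereal (h u)"
  shows "l1_norm g * c \<le> ereal (LINT u|lborel. g u * h u)"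
proof -
  note gm[measurable]
  define G where "G = (\<integral>\<^sup>+ r. ennreal (g r) \<partial>lborel)"
  have l1: "l1_norm g = enn2ereal G" unfolding l1_norm_def G_def using g_nn by simp
  have ghm[measurable]: "(\<lambda>u. g u * h u) \<in> borel_measurable lborel" using int by (rule borel_measurable_integrable)
  show ?thesis
  proof (cases c)
    case PInf
    have "c \<le> ereal (h 0)" using hc by simp
    then show ?thesis using PInf by simp
  next
    case MInf
    show ?thesis
    proof (cases "G = 0")
      case True
      then have "AE u in lborel. ennreal (g u) = 0" unfolding G_def
        by (subst (asm) nn_integral_0_iff_AE, auto)
      then have "AE u in lborel. g u * h u = 0"
      proof eventually_elim
        fix u assume "ennreal (g u) = 0"
        then have "g u \<le> 0" by (simp add: ennreal_eq_0_iff)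
        then have "g u = 0" using g_nn by (meson antisym)
        then show "g u * h u = 0" by simp
      qed
      then have "(LINT u|lborel. g u * h u) = 0" by (simp add: integral_eq_zero_AE)
      moreover have "enn2ereal 0 = 0" by (simp add: zero_ennreal.rep_eq)
      ultimately show ?thesis using l1 True by simp
    next
      case False
      have "enn2ereal G \<noteq> 0"
        using False by (metis e2ennreal_enn2ereal zero_ennreal.rep_eq)
      then have "enn2ereal G > 0" using enn2ereal_nonneg[of G] by (simp add: less_le)
      then show ?thesis using l1 MInf by simp
    qed
  next
    case (real a)
    show ?thesis
    proof (cases "G = \<infinity>")
      case False
      then obtain Gr where Gr: "G = ennreal Gr" "Gr \<ge> 0" by (cases G) auto
      have gi: "integrable lborel g"
        by (rule integrableI_nn_integral_finite[where x=Gr], measurable, insert g_nn Gr, auto simp: G_def)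
      have "(LINT u|lborel. g u) = enn2real G" unfolding G_def
        by (rule integral_eq_nn_integral, measurable, insert g_nn, auto)
      then have ig: "(LINT u|lborel. g u) = Gr" using Gr by simp
      have "(LINT u|lborel. g u * a) \<le> (LINT u|lborel. g u * h u)"
        by (rule integral_mono[OF _ int], insert gi g_nn hc real, auto intro!: mult_left_mono)
      then have "Gr * a \<le> (LINT u|lborel. g u * h u)" using ig by simp
      then show ?thesis using l1 Gr real by simp
    next
      case True
      then have l1i: "l1_norm g = \<infinity>" using l1 by simp
      show ?thesis
      proof (cases "a > 0")
        case True
        have ptw: "g u \<le> g u * h u * (1 / a)" for u
        proof -
          have "a \<le> h u" using hc real by (metis ereal_less_eq(3))
          then have "g u * a \<le> g u * h u" using g_nn by (simp add: mult_left_mono)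
          then show ?thesis using True by (simp add: field_simps)
        qed
        have "G \<le> (\<integral>\<^sup>+ u. ennreal (g u * h u) * ennreal (1 / a) \<partial>lborel)" unfolding G_def
        proof (rule nn_integral_mono)
          fix u
          have "a \<le> h u" using hc real by (metis ereal_less_eq(3))
          then have "0 \<le> h u" using True by simp
          then have "0 \<le> g u * h u" using g_nn by simp
          then have "ennreal (g u * h u) * ennreal (1 / a) = ennreal (g u * h u * (1 / a))"
            using True by (subst ennreal_mult, auto)
          then show "ennreal (g u) \<le> ennreal (g u * h u) * ennreal (1 / a)"
            using ptw[of u] by (simp add: ennreal_leI)
        qed
        also have "\<dots> = (\<integral>\<^sup>+ u. ennreal (g u * h u) \<partial>lborel) * ennreal (1 / a)"
          by (rule nn_integral_multc, measurable)
        also have "\<dots> < \<infinity>"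
        proof -
          have "(\<integral>\<^sup>+ u. ennreal (g u * h u) \<partial>lborel) \<le> (\<integral>\<^sup>+ u. ennreal (norm (g u * h u)) \<partial>lborel)"
            by (intro nn_integral_mono, simp)
          also have "\<dots> < \<infinity>" using int unfolding integrable_iff_bounded by simp
          finally show ?thesis by (simp add: ennreal_mult_less_top)
        qed
        finally show ?thesis using \<open>G = \<infinity>\<close> by simp
      next
        case False
        show ?thesis
        proof (cases "a = 0")
          case True
          have "0 \<le> (LINT u|lborel. g u * h u)"
            using g_nn hc real True by (intro integral_nonneg_AE, auto)
          moreover have "l1_norm g * ereal 0 = 0" by (simp add: zero_ereal_def[symmetric])
          ultimately show ?thesis using real True by (simp add: zero_ereal_def[symmetric])
        next
          case False
          then have "a < 0" using \<open>\<not> a > 0\<close> by simp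
          then show ?thesis using l1i real by simp
        qed
      qed
    qed
  qed
qed


lemma cyc: "P \<in> carrier_mat n n \<Longrightarrow> Q \<in> carrier_mat n n \<Longrightarrow> mtrace (P * Q) = mtrace (Q * P)"
  by (rule mtrace_comm)

lemma tr_add_r: "X \<in> carrier_mat n n \<Longrightarrow> P \<in> carrier_mat n n \<Longrightarrow> Q \<in> carrier_mat n n \<Longrightarrow>
  mtrace (X * (P + Q)) = mtrace (X * P) + mtrace (X * Q)"
  by (simp add: mult_add_distrib_mat[of _ n n] mtrace_add[of _ n])

lemma tr_minus_r: "X \<in> carrier_mat n n \<Longrightarrow> P \<in> carrier_mat n n \<Longrightarrow> Q \<in> carrier_mat n n \<Longrightarrow>
  mtrace (X * (P - Q)) = mtrace (X * P) - mtrace (X * Q)"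
  by (simp add: mult_minus_distrib_mat[of _ n n] mtrace_minus[of _ n])

lemma tr_smult_r: "X \<in> carrier_mat n n \<Longrightarrow> P \<in> carrier_mat n n \<Longrightarrow>
  mtrace (X * (c \<cdot>\<^sub>m P)) = c * mtrace (X * P)"
  by (simp add: mult_smult_distrib[of _ n n] mtrace_smult[of _ n])

lemma tr_add_l: "X \<in> carrier_mat n n \<Longrightarrow> P \<in> carrier_mat n n \<Longrightarrow> Q \<in> carrier_mat n n \<Longrightarrow>
  mtrace ((P + Q) * X) = mtrace (P * X) + mtrace (Q * X)"
  by (simp add: add_mult_distrib_mat[of _ n n] mtrace_add[of _ n])

lemma tr_minus_l: "X \<in> carrier_mat n n \<Longrightarrow> P \<in> carrier_mat n n \<Longrightarrow> Q \<in> carrier_mat n n \<Longrightarrow>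
  mtrace ((P - Q) * X) = mtrace (P * X) - mtrace (Q * X)"
  by (simp add: minus_mult_distrib_mat[of _ n n] mtrace_minus[of _ n])

lemma tr_smult_l: "X \<in> carrier_mat n n \<Longrightarrow> P \<in> carrier_mat n n \<Longrightarrow>
  mtrace ((c \<cdot>\<^sub>m P) * X) = c * mtrace (P * X)"
  by (simp add: mult_smult_assoc_mat[of _ n n] mtrace_smult[of _ n])

lemma jump_adj:
  assumes J: "J \<in> carrier_mat n n" and Y: "Y \<in> carrier_mat n n" and A: "A \<in> carrier_mat n n"
  shows "mtrace (adj (adj J * Y * J - (1/2) \<cdot>\<^sub>m (adj J * J * Y + Y * (adj J * J))) * A)
       = mtrace (adj Y * (J * A * adj J - (1/2) \<cdot>\<^sub>m (adj J * J * A + A * (adj J * J))))"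
proof -
  have aJ: "adj J \<in> carrier_mat n n" and aY: "adj Y \<in> carrier_mat n n" using J Y by auto
  have adjT: "adj (adj J * Y * J - (1/2) \<cdot>\<^sub>m (adj J * J * Y + Y * (adj J * J)))
     = adj J * adj Y * J - (1/2) \<cdot>\<^sub>m (adj Y * (adj J * J) + adj J * J * adj Y)"
    using J Y aJ aY
    by (simp add: adj_minus[of _ n n] adj_smult adj_add[of _ n n] adj_mult[of _ n n _ n] sq_assoc[of _ n])
  have t1: "mtrace (adj J * adj Y * J * A) = mtrace (adj Y * (J * A * adj J))"
  proof -
    have "mtrace (adj J * adj Y * J * A) = mtrace (adj J * (adj Y * J * A))"
      using J Y A aJ aY by (simp add: sq_assoc[of _ n])
    also have "\<dots> = mtrace ((adj Y * J * A) * adj J)" by (rule cyc, insert J Y A aJ aY, auto)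
    also have "\<dots> = mtrace (adj Y * (J * A * adj J))" using J Y A aJ aY by (simp add: sq_assoc[of _ n])
    finally show ?thesis .
  qed
  have t2: "mtrace (adj Y * (adj J * J) * A) = mtrace (adj Y * (adj J * J * A))"
    using J Y A aJ aY by (simp add: sq_assoc[of _ n])
  have t3: "mtrace (adj J * J * adj Y * A) = mtrace (adj Y * (A * (adj J * J)))"
  proof -
    have "mtrace (adj J * J * adj Y * A) = mtrace ((adj J * J) * (adj Y * A))"
      using J Y A aJ aY by (simp add: sq_assoc[of _ n])
    also have "\<dots> = mtrace ((adj Y * A) * (adj J * J))" by (rule cyc, insert J Y A aJ aY, auto)
    also have "\<dots> = mtrace (adj Y * (A * (adj J * J)))" using J Y A aJ aY by (simp add: sq_assoc[of _ n])
    finally show ?thesis .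
  qed
  show ?thesis unfolding adjT using J Y A aJ aY
    by (simp add: tr_minus_l[of A n] tr_smult_l[of A n] tr_add_l[of A n]
        tr_minus_r[of "adj Y" n] tr_smult_r[of "adj Y" n] tr_add_r[of "adj Y" n] t1 t2 t3)
qed

lemma comm_adj:
  assumes K: "K \<in> carrier_mat n n" and hK: "adj K = K" and Y: "Y \<in> carrier_mat n n" and A: "A \<in> carrier_mat n n"
  shows "mtrace (adj (\<i> \<cdot>\<^sub>m (K * Y - Y * K)) * A) = mtrace (adj Y * ((- \<i>) \<cdot>\<^sub>m (K * A - A * K)))"
proof -
  have aY: "adj Y \<in> carrier_mat n n" using Y by auto
  have a: "adj (\<i> \<cdot>\<^sub>m (K * Y - Y * K)) = (- \<i>) \<cdot>\<^sub>m (adj Y * K - K * adj Y)"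
    using K Y hK by (simp add: adj_smult adj_minus[of _ n n] adj_mult[of _ n n _ n])
  have t: "mtrace (K * adj Y * A) = mtrace (adj Y * (A * K))"
  proof -
    have "mtrace (K * adj Y * A) = mtrace (K * (adj Y * A))" using K aY A by (simp add: sq_assoc[of _ n])
    also have "\<dots> = mtrace ((adj Y * A) * K)" by (rule cyc, insert K aY A, auto)
    also have "\<dots> = mtrace (adj Y * (A * K))" using K aY A by (simp add: sq_assoc[of _ n])
    finally show ?thesis .
  qed
  have t2: "mtrace (adj Y * K * A) = mtrace (adj Y * (K * A))" using K aY A by (simp add: sq_assoc[of _ n])
  have c1: "adj Y * K - K * adj Y \<in> carrier_mat n n" using K aY by (simp add: minus_carrier_mat)
  have c2: "K * A - A * K \<in> carrier_mat n n" using K A by (simp add: minus_carrier_mat)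
  have "mtrace ((- \<i>) \<cdot>\<^sub>m (adj Y * K - K * adj Y) * A) = (- \<i>) * mtrace ((adj Y * K - K * adj Y) * A)"
    by (rule tr_smult_l[OF A c1])
  also have "mtrace ((adj Y * K - K * adj Y) * A) = mtrace (adj Y * K * A) - mtrace (K * adj Y * A)"
    by (rule tr_minus_l[OF A], insert K aY, auto)
  also have "\<dots> = mtrace (adj Y * (K * A - A * K))"
    unfolding t t2 by (rule tr_minus_r[symmetric], insert K aY A, auto)
  also have "(- \<i>) * \<dots> = mtrace (adj Y * ((- \<i>) \<cdot>\<^sub>m (K * A - A * K)))"
    by (rule tr_smult_r[symmetric, OF aY c2])
  finally show ?thesis unfolding a .
qed

definition FL :: "nat \<Rightarrow> complex mat list \<Rightarrow> complex mat \<Rightarrow> complex mat" where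
  "FL n Js A = foldr (\<lambda>J acc. (J * A * adj J - (1/2) \<cdot>\<^sub>m (adj J * J * A + A * (adj J * J))) + acc) Js (0\<^sub>m n n)"

definition FA :: "nat \<Rightarrow> complex mat list \<Rightarrow> complex mat \<Rightarrow> complex mat" where
  "FA n Js Y = foldr (\<lambda>J acc. (adj J * Y * J - (1/2) \<cdot>\<^sub>m (adj J * J * Y + Y * (adj J * J))) + acc) Js (0\<^sub>m n n)"

lemma FL_FA:
  assumes Js: "set Js \<subseteq> carrier_mat n n" and Y: "Y \<in> carrier_mat n n" and A: "A \<in> carrier_mat n n"
  shows "FL n Js A \<in> carrier_mat n n \<and> FA n Js Y \<in> carrier_mat n n \<and>
    mtrace (adj (FA n Js Y) * A) = mtrace (adj Y * FL n Js A)"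
  using Js
proof (induction Js)
  case Nil
  then show ?case unfolding FL_def FA_def using Y A by (simp add: mtrace_def)
next
  case (Cons J Js)
  then have J: "J \<in> carrier_mat n n" and IH: "FL n Js A \<in> carrier_mat n n" "FA n Js Y \<in> carrier_mat n n"
    "mtrace (adj (FA n Js Y) * A) = mtrace (adj Y * FL n Js A)" by auto
  have aJ: "adj J \<in> carrier_mat n n" and aY: "adj Y \<in> carrier_mat n n" using J Y by auto
  define T where "T = adj J * Y * J - (1/2) \<cdot>\<^sub>m (adj J * J * Y + Y * (adj J * J))"
  define R where "R = J * A * adj J - (1/2) \<cdot>\<^sub>m (adj J * J * A + A * (adj J * J))"
  have Tc: "T \<in> carrier_mat n n" unfolding T_def using J Y aJ by (simp add: minus_carrier_mat)
  have Rc: "R \<in> carrier_mat n n" unfolding R_def using J A aJ by (simp add: minus_carrier_mat)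
  have FL: "FL n (J # Js) A = R + FL n Js A" unfolding FL_def R_def by simp
  have FA: "FA n (J # Js) Y = T + FA n Js Y" unfolding FA_def T_def by simp
  have "mtrace (adj (FA n (J # Js) Y) * A) = mtrace (adj T * A) + mtrace (adj (FA n Js Y) * A)"
    unfolding FA using Tc IH A by (simp add: adj_add[of _ n n] tr_add_l[of A n])
  also have "mtrace (adj T * A) = mtrace (adj Y * R)" unfolding T_def R_def by (rule jump_adj[OF J Y A])
  also have "mtrace (adj Y * R) + mtrace (adj (FA n Js Y) * A) = mtrace (adj Y * FL n (J # Js) A)"
    unfolding FL IH(3) using Rc IH aY by (simp add: tr_add_r[of "adj Y" n])
  finally show ?case using FL FA Tc Rc IH by simp
qed

lemma hs_adj_lind:
  assumes L: "lindbladian n L" and Y: "Y \<in> carrier_mat n n"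
  shows "hs_adj n L Y \<in> carrier_mat n n \<and>
     (\<forall>A \<in> carrier_mat n n. mtrace (adj (hs_adj n L Y) * A) = mtrace (adj Y * L A))"
proof -
  have "\<exists>K Js. hermitian n K \<and> set Js \<subseteq> carrier_mat n n \<and>
    (\<forall>\<rho> \<in> carrier_mat n n. L \<rho> = (- \<i>) \<cdot>\<^sub>m (K * \<rho> - \<rho> * K) + FL n Js \<rho>)"
    using L unfolding lindbladian_def FL_def .
  then obtain K Js where hK: "hermitian n K" and Js: "set Js \<subseteq> carrier_mat n n"
    and LA: "\<forall>\<rho> \<in> carrier_mat n n. L \<rho> = (- \<i>) \<cdot>\<^sub>m (K * \<rho> - \<rho> * K) + FL n Js \<rho>"
    by blast
  have K: "K \<in> carrier_mat n n" and aK: "adj K = K" using hK unfolding hermitian_def by auto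
  define Ad where "Ad = \<i> \<cdot>\<^sub>m (K * Y - Y * K) + FA n Js Y"
  have FAc: "FA n Js Y \<in> carrier_mat n n" using FL_FA[OF Js Y Y] by simp
  have Adc: "Ad \<in> carrier_mat n n" unfolding Ad_def using FAc by simp
  have Adp: "mtrace (adj Ad * A) = mtrace (adj Y * L A)" if A: "A \<in> carrier_mat n n" for A
  proof -
    have FLc: "FL n Js A \<in> carrier_mat n n" using FL_FA[OF Js Y A] by simp
    have c1: "\<i> \<cdot>\<^sub>m (K * Y - Y * K) \<in> carrier_mat n n" using K Y by (simp add: minus_carrier_mat)
    have c2: "(- \<i>) \<cdot>\<^sub>m (K * A - A * K) \<in> carrier_mat n n" using K A by (simp add: minus_carrier_mat)
    have "mtrace (adj Ad * A) = mtrace (adj (\<i> \<cdot>\<^sub>m (K * Y - Y * K)) * A) + mtrace (adj (FA n Js Y) * A)"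
      unfolding Ad_def using c1 FAc A by (simp add: adj_add[of _ n n] tr_add_l[of A n])
    also have "\<dots> = mtrace (adj Y * ((- \<i>) \<cdot>\<^sub>m (K * A - A * K))) + mtrace (adj Y * FL n Js A)"
      using comm_adj[OF K aK Y A] FL_FA[OF Js Y A] by simp
    also have "\<dots> = mtrace (adj Y * L A)" using LA A c2 FLc Y by (simp add: tr_add_r[of "adj Y" n])
    finally show ?thesis .
  qed
  have uniq: "Z = Ad" if Zc: "Z \<in> carrier_mat n n" and Zp: "\<forall>A \<in> carrier_mat n n. mtrace (adj Z * A) = mtrace (adj Y * L A)" for Z
  proof (rule eq_matI)
    fix i j assume i: "i < dim_row Ad" and j: "j < dim_col Ad"
    then have i: "i < n" and j: "j < n" using Adc by auto
    define E where "E = Matrix.mat n n (\<lambda>(a,b). if a = i \<and> b = j then (1::complex) else 0)"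
    have Ec: "E \<in> carrier_mat n n" unfolding E_def by simp
    have tr: "mtrace (adj M * E) = cnj (M $$ (i,j))" if M: "M \<in> carrier_mat n n" for M
    proof -
      have "mtrace (adj M * E) = (\<Sum>a<n. (adj M * E) $$ (a,a))" unfolding mtrace_def using M by simp
      also have "\<dots> = (\<Sum>a<n. if a = j then cnj (M $$ (i,j)) else 0)"
      proof (intro sum.cong refl)
        fix a assume a: "a \<in> {..<n}"
        have "(adj M * E) $$ (a,a) = (\<Sum>l<n. adj M $$ (a,l) * E $$ (l,a))"
          using mult_entry[of "adj M" n n E n a a] M Ec a by simp
        also have "\<dots> = (\<Sum>l<n. if l = i then (if a = j then cnj (M $$ (i,j)) else 0) else 0)"
          using M a i j unfolding E_def by (intro sum.cong refl, auto)
        also have "\<dots> = (if a = j then cnj (M $$ (i,j)) else 0)" using i by simp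
        finally show "(adj M * E) $$ (a,a) = (if a = j then cnj (M $$ (i,j)) else 0)" .
      qed
      also have "\<dots> = cnj (M $$ (i,j))" using j by simp
      finally show ?thesis .
    qed
    have "cnj (Z $$ (i,j)) = mtrace (adj Z * E)" using tr[OF Zc] by simp
    also have "\<dots> = mtrace (adj Y * L E)" using Zp Ec by blast
    also have "\<dots> = mtrace (adj Ad * E)" using Adp[OF Ec] by simp
    also have "\<dots> = cnj (Ad $$ (i,j))" using tr[OF Adc] by simp
    finally have "cnj (Z $$ (i,j)) = cnj (Ad $$ (i,j))" .
    then show "Z $$ (i,j) = Ad $$ (i,j)" by simp
  qed (insert Zc Adc, auto)
  have "hs_adj n L Y = Ad" unfolding hs_adj_def
  proof (rule the_equality)
    show "Ad \<in> carrier_mat n n \<and> (\<forall>A\<in>carrier_mat n n. mtrace (adj Ad * A) = mtrace (adj Y * L A))"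
      using Adc Adp by blast
  next
    fix Z assume "Z \<in> carrier_mat n n \<and> (\<forall>A\<in>carrier_mat n n. mtrace (adj Z * A) = mtrace (adj Y * L A))"
    then show "Z = Ad" using uniq by blast
  qed
  then show ?thesis using Adc Adp by simp
qed


lemma lind_carrier: assumes L: "lindbladian n L" and A: "A \<in> carrier_mat n n"
  shows "L A \<in> carrier_mat n n"
proof -
  have "\<exists>K Js. hermitian n K \<and> set Js \<subseteq> carrier_mat n n \<and>
    (\<forall>\<rho> \<in> carrier_mat n n. L \<rho> = (- \<i>) \<cdot>\<^sub>m (K * \<rho> - \<rho> * K) + FL n Js \<rho>)"
    using L unfolding lindbladian_def FL_def .
  then obtain K Js where hK: "hermitian n K" and Js: "set Js \<subseteq> carrier_mat n n"
    and LA: "\<forall>\<rho> \<in> carrier_mat n n. L \<rho> = (- \<i>) \<cdot>\<^sub>m (K * \<rho> - \<rho> * K) + FL n Js \<rho>"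
    by blast
  have "FL n Js A \<in> carrier_mat n n" using FL_FA[OF Js A A] by simp
  then show ?thesis using LA A by simp
qed


context hset
begin

abbreviation rho where "rho \<equiv> gibbs n \<beta> H"

definition Yv where "Yv X = X - kms n rho (1\<^sub>m n) X \<cdot>\<^sub>m 1\<^sub>m n"
definition ratioG where "ratioG L X = Re (- kms n rho X (hs_adj n L X)) / Re (kms n rho (Yv X) (Yv X))"

lemma spectral_gap_eq: "spectral_gap n rho L = Inf {ereal (ratioG L X) | X. hermitian n X \<and> Yv X \<noteq> 0\<^sub>m n n}"
  unfolding spectral_gap_def ratioG_def Yv_def ..

lemma Yv_carrier: "X \<in> carrier_mat n n \<Longrightarrow> Yv X \<in> carrier_mat n n"
  unfolding Yv_def by (simp add: minus_carrier_mat)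

lemma Yv_conj: assumes X: "X \<in> carrier_mat n n"
  shows "Yv (W t * X * adj (W t)) = W t * Yv X * adj (W t)"
proof -
  have "kms n rho (1\<^sub>m n) (W t * X * adj (W t)) = kms n rho (W t * 1\<^sub>m n * adj (W t)) (W t * X * adj (W t))"
    unfolding conjW_one ..
  also have "\<dots> = kms n rho (1\<^sub>m n) X" by (rule kms_inv[OF _ X], simp)
  finally have k: "kms n rho (1\<^sub>m n) (W t * X * adj (W t)) = kms n rho (1\<^sub>m n) X" .
  show ?thesis unfolding Yv_def k using X
    by (simp add: conjW_minus conjW_smult conjW_one unitary_cancel(3)[OF W_unitary])
qed

lemma conj_herm: "hermitian n X \<Longrightarrow> hermitian n (W t * X * adj (W t))"
  unfolding hermitian_def using conjW_adj by auto

lemma var_inv: assumes X: "X \<in> carrier_mat n n"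
  shows "kms n rho (Yv (W t * X * adj (W t))) (Yv (W t * X * adj (W t))) = kms n rho (Yv X) (Yv X)"
  unfolding Yv_conj[OF X] by (rule kms_inv, insert Yv_carrier[OF X], auto)

lemma Yv_nz: assumes X: "X \<in> carrier_mat n n" and nz: "Yv X \<noteq> 0\<^sub>m n n"
  shows "Yv (W t * X * adj (W t)) \<noteq> 0\<^sub>m n n"
proof
  assume "Yv (W t * X * adj (W t)) = 0\<^sub>m n n"
  moreover have "W t * 0\<^sub>m n n * adj (W t) = 0\<^sub>m n n"
  proof -
    have "W t * 0\<^sub>m n n = 0\<^sub>m n n" by (rule right_mult_zero_mat, simp)
    moreover have "0\<^sub>m n n * adj (W t) = 0\<^sub>m n n" by (rule left_mult_zero_mat, simp add: unitary_cancel[OF W_unitary])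
    ultimately show ?thesis by simp
  qed
  ultimately have "W t * Yv X * adj (W t) = W t * 0\<^sub>m n n * adj (W t)"
    unfolding Yv_conj[OF X] by simp
  then have "Yv X = 0\<^sub>m n n" by (rule conjW_inj[OF Yv_carrier[OF X] zero_carrier_mat])
  then show False using nz by simp
qed

lemma corrE_eq: "X \<in> carrier_mat n n \<Longrightarrow> corr_E n \<beta> H L X Y s =
   - kms n rho (W (s * \<beta>) * Y * adj (W (s * \<beta>))) (hs_adj n L (W (s * \<beta>) * X * adj (W (s * \<beta>))))"
  unfolding corr_E_def heis_eq ..

lemma corrE0: "X \<in> carrier_mat n n \<Longrightarrow> Y \<in> carrier_mat n n \<Longrightarrow> corr_E n \<beta> H L X Y 0 = - kms n rho Y (hs_adj n L X)"
  unfolding corr_E_def by (simp add: heis0)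

lemma gap_part:
  fixes Ld Ld' :: "complex mat \<Rightarrow> complex mat" and fd fd' g :: "real \<Rightarrow> real"
    and Einf :: "complex mat \<Rightarrow> complex mat \<Rightarrow> real \<Rightarrow> complex"
  assumes fd_int: "integrable lborel fd" and fd_nn: "\<forall>r. fd r \<ge> 0"
    and fd'_int: "integrable lborel fd'" and fd'_nn: "\<forall>r. fd' r \<ge> 0"
    and g_nn: "\<forall>r. g r \<ge> 0" and g_meas: "g \<in> borel_measurable lborel"
    and semi: "\<forall>s. ennreal (fd s) = (\<integral>\<^sup>+ r. ennreal (g r * fd' (s - r)) \<partial>lborel)"
    and conv: "\<And>X Y. hermitian n X \<Longrightarrow> hermitian n Y \<Longrightarrow> is_convolution fd (Einf X Y) (corr_E n \<beta> H Ld X Y)"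
    and conv': "\<And>X Y. hermitian n X \<Longrightarrow> hermitian n Y \<Longrightarrow> is_convolution fd' (Einf X Y) (corr_E n \<beta> H Ld' X Y)"
  shows "l1_norm g * spectral_gap n rho Ld' \<le> spectral_gap n rho Ld"
  unfolding spectral_gap_eq[of Ld]
proof (rule Inf_greatest)
  fix z assume "z \<in> {ereal (ratioG Ld X) | X. hermitian n X \<and> Yv X \<noteq> 0\<^sub>m n n}"
  then obtain X where z: "z = ereal (ratioG Ld X)" and hX: "hermitian n X" and nz: "Yv X \<noteq> 0\<^sub>m n n" by blast
  have Xc: "X \<in> carrier_mat n n" using hX hermitianD by auto
  define V where "V = Re (kms n rho (Yv X) (Yv X))"
  define N where "N s = corr_E n \<beta> H Ld' X X s" for s
  have intN: "integrable lborel (\<lambda>u. complex_of_real (g u) * N (- u))"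
    and E0: "corr_E n \<beta> H Ld X X 0 = (LINT u|lborel. complex_of_real (g u) * N (- u))"
    unfolding N_def using conv_fubini[OF fd_int fd_nn fd'_int fd'_nn g_nn g_meas semi conv[OF hX hX] conv'[OF hX hX]]
    by auto
  define h where "h u = Re (N (- u)) / V" for u
  have intR: "integrable lborel (\<lambda>u. Re (complex_of_real (g u) * N (- u)))" by (rule integrable_Re[OF intN])
  have inth: "integrable lborel (\<lambda>u. g u * h u)"
  proof -
    have "integrable lborel (\<lambda>u. Re (complex_of_real (g u) * N (- u)) / V)" using intR by (rule integrable_divide_zero)
    moreover have "(\<lambda>u. Re (complex_of_real (g u) * N (- u)) / V) = (\<lambda>u. g u * h u)"
      unfolding h_def by auto
    ultimately show ?thesis by metis
  qed
  have ratio: "ratioG Ld X = (LINT u|lborel. g u * h u)"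
  proof -
    have "ratioG Ld X = Re (corr_E n \<beta> H Ld X X 0) / V"
      unfolding ratioG_def V_def corrE0[OF Xc Xc] ..
    also have "\<dots> = (LINT u|lborel. Re (complex_of_real (g u) * N (- u))) / V"
      unfolding E0 integral_Re[OF intN] ..
    also have "\<dots> = (LINT u|lborel. Re (complex_of_real (g u) * N (- u)) / V)" by (rule integral_divide_zero[symmetric])
    also have "(\<lambda>u. Re (complex_of_real (g u) * N (- u)) / V) = (\<lambda>u. g u * h u)"
      unfolding h_def by auto
    finally show ?thesis .
  qed
  have hb: "\<forall>u. spectral_gap n rho Ld' \<le> ereal (h u)"
  proof
    fix u
    define t where "t = - u * \<beta>"
    define Xt where "Xt = W t * X * adj (W t)"
    have "h u = ratioG Ld' Xt"
    proof -
      have "N (- u) = - kms n rho Xt (hs_adj n Ld' Xt)" unfolding N_def corrE_eq[OF Xc] Xt_def t_def by simp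
      moreover have "Re (kms n rho (Yv Xt) (Yv Xt)) = V" unfolding Xt_def V_def var_inv[OF Xc] ..
      ultimately show ?thesis unfolding h_def ratioG_def by simp
    qed
    moreover have "ereal (ratioG Ld' Xt) \<in> {ereal (ratioG Ld' X) | X. hermitian n X \<and> Yv X \<noteq> 0\<^sub>m n n}"
      using conj_herm[OF hX] Yv_nz[OF Xc nz] unfolding Xt_def by blast
    ultimately show "spectral_gap n rho Ld' \<le> ereal (h u)" unfolding spectral_gap_eq by (simp add: Inf_lower)
  qed
  show "l1_norm g * spectral_gap n rho Ld' \<le> z"
    unfolding z ratio by (rule ereal_bound[OF g_nn g_meas inth hb])
qed

end


lemma quad_sum: assumes A: "A \<in> carrier_mat n m" and v: "v \<in> carrier_vec n" and x: "x \<in> carrier_vec m"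
  shows "conjugate v \<bullet> (A *\<^sub>v x) = (\<Sum>i<n. cnj (v$i) * (\<Sum>j<m. A$$(i,j) * x$j))"
  using A v x by (simp add: scalar_prod_def lessThan_atLeast0)

lemma adj_vec: assumes W: "W \<in> carrier_mat n n" and v: "v \<in> carrier_vec n" and x: "x \<in> carrier_vec n"
  shows "conjugate v \<bullet> (W *\<^sub>v x) = conjugate (adj W *\<^sub>v v) \<bullet> x"
proof -
  have aWv: "adj W *\<^sub>v v \<in> carrier_vec n" using W v by (metis adj_carrier mult_mat_vec_carrier)
  have "conjugate v \<bullet> (W *\<^sub>v x) = (\<Sum>i<n. \<Sum>j<n. cnj (v$i) * W$$(i,j) * x$j)"
    using quad_sum[OF W v x] by (simp add: sum_distrib_left mult.assoc)
  also have "\<dots> = (\<Sum>j<n. \<Sum>i<n. cnj (v$i) * W$$(i,j) * x$j)" by (rule sum.swap)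
  also have "\<dots> = conjugate (adj W *\<^sub>v v) \<bullet> x"
    using W v x aWv by (simp add: scalar_prod_def lessThan_atLeast0 sum_distrib_right
        sum_distrib_left mult.commute mult.left_commute)
  finally show ?thesis .
qed

lemma quad_conj: assumes W: "W \<in> carrier_mat n n" and A: "A \<in> carrier_mat n n" and v: "v \<in> carrier_vec n"
  shows "conjugate v \<bullet> ((W * A * adj W) *\<^sub>v v) = conjugate (adj W *\<^sub>v v) \<bullet> (A *\<^sub>v (adj W *\<^sub>v v))"
proof -
  have aWv: "adj W *\<^sub>v v \<in> carrier_vec n" using W v by (metis adj_carrier mult_mat_vec_carrier)
  have AaWv: "A *\<^sub>v (adj W *\<^sub>v v) \<in> carrier_vec n" using A aWv by (metis mult_mat_vec_carrier)
  have "(W * A * adj W) *\<^sub>v v = W *\<^sub>v (A *\<^sub>v (adj W *\<^sub>v v))"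
    using W A v aWv by (simp add: assoc_mult_mat_vec[of _ n n _ n] assoc_mult_mat_vec[of W n n A n])
  then show ?thesis using adj_vec[OF W v AaWv] by simp
qed

lemma col_quad: assumes V: "V \<in> carrier_mat n n" and A: "A \<in> carrier_mat n n" and i: "i < n"
  shows "conjugate (col V i) \<bullet> (A *\<^sub>v col V i) = (adj V * A * V) $$ (i,i)"
proof -
  have "conjugate (col V i) \<bullet> (A *\<^sub>v col V i) = (\<Sum>k<n. cnj (V$$(k,i)) * (\<Sum>l<n. A$$(k,l) * V$$(l,i)))"
    using quad_sum[OF A, of "col V i" "col V i"] V i by (simp add: carrier_vecI)
  also have "\<dots> = (\<Sum>l<n. (\<Sum>k<n. cnj (V$$(k,i)) * A$$(k,l)) * V$$(l,i))"
    by (simp add: sum_distrib_left sum_distrib_right mult.assoc, rule sum.swap)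
  also have "\<dots> = (adj V * A * V) $$ (i,i)"
  proof -
    have "(adj V * A * V) $$ (i,i) = (\<Sum>l<n. (adj V * A) $$ (i,l) * V$$(l,i))"
      by (rule mult_entry, insert V A i, auto)
    also have "\<dots> = (\<Sum>l<n. (\<Sum>k<n. cnj (V$$(k,i)) * A$$(k,l)) * V$$(l,i))"
    proof (intro sum.cong refl)
      fix l assume l: "l \<in> {..<n}"
      have "(adj V * A) $$ (i,l) = (\<Sum>k<n. adj V $$ (i,k) * A$$(k,l))"
        by (rule mult_entry, insert V A i l, auto)
      then show "(adj V * A) $$ (i,l) * V$$(l,i) = (\<Sum>k<n. cnj (V$$(k,i)) * A$$(k,l)) * V$$(l,i)"
        using V i by simp
    qed
    finally show ?thesis by simp
  qed
  finally show ?thesis .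
qed

lemma posdef_eig: assumes V: "unitary n V" and P: "posdef n (fU n V (\<lambda>i. complex_of_real (q i)))" and i: "i < n"
  shows "q i > 0"
proof -
  note u = unitary_cancel[OF V]
  have Vc: "V \<in> carrier_mat n n" using u by simp
  define v where "v = col V i"
  have vc: "v \<in> carrier_vec n" unfolding v_def using Vc by (simp add: carrier_vecI)
  have "conjugate v \<bullet> (1\<^sub>m n *\<^sub>v v) = (adj V * 1\<^sub>m n * V) $$ (i,i)" unfolding v_def by (rule col_quad[OF Vc _ i], simp)
  also have "\<dots> = 1" using u i by simp
  finally have "v \<noteq> 0\<^sub>v n" by auto
  then have "0 < Re (conjugate v \<bullet> (fU n V (\<lambda>i. complex_of_real (q i)) *\<^sub>v v))"
    using P vc unfolding posdef_def by blast
  also have "conjugate v \<bullet> (fU n V (\<lambda>i. complex_of_real (q i)) *\<^sub>v v) = (adj V * fU n V (\<lambda>i. complex_of_real (q i)) * V) $$ (i,i)"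
    unfolding v_def by (rule col_quad[OF Vc _ i], simp add: V)
  also have "adj V * fU n V (\<lambda>i. complex_of_real (q i)) * V = mat_diag n (\<lambda>i. complex_of_real (q i))"
    unfolding fU_def using u by (simp add: sq_assoc[of _ n])
  finally show ?thesis using i by (simp add: mat_diag_def)
qed


context hset
begin

lemma W_dims[simp]: "dim_row (W t) = n" "dim_col (W t) = n"
  using carriers(4)[of t] unfolding carrier_mat_def by auto

lemma conjW_mult: "X \<in> carrier_mat n n \<Longrightarrow> Y \<in> carrier_mat n n \<Longrightarrow>
  W t * X * adj (W t) * (W t * Y * adj (W t)) = W t * (X * Y) * adj (W t)"
  by (rule conj_mult[OF W_unitary])

lemma mtrace_conjW: assumes X: "X \<in> carrier_mat n n" shows "mtrace (W t * X * adj (W t)) = mtrace X"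
proof -
  note w = unitary_cancel[OF W_unitary[of t]]
  have "mtrace (W t * X * adj (W t)) = mtrace (W t * (X * adj (W t)))" using X w by (simp add: sq_assoc[of _ n])
  also have "\<dots> = mtrace ((X * adj (W t)) * W t)" by (rule cyc[of _ n], insert X w, auto)
  also have "\<dots> = mtrace X" using X w by (simp add: sq_assoc[of _ n])
  finally show ?thesis .
qed

lemma W_fix: assumes A: "A \<in> carrier_mat n n" and AW: "A * W t = W t * A"
  shows "W t * A * adj (W t) = A"
proof -
  note w = unitary_cancel[OF W_unitary[of t]]
  have "W t * A * adj (W t) = A * W t * adj (W t)" unfolding AW ..
  also have "\<dots> = A" using A w by (simp add: sq_assoc[of _ n])
  finally show ?thesis .
qed

lemma LR_fix: "W t * LR * adj (W t) = LR" by (rule W_fix[OF _ LR_W], simp)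
lemma rho_fix: "W t * rho * adj (W t) = rho" by (rule W_fix[OF _ rho_W], simp)
lemma Si_fix: "W t * Si * adj (W t) = Si" by (rule W_fix[OF _ Si_W], simp)

lemma EP_lemma:
  assumes Lind: "lindbladian n L" and KS: "kms_symmetric n rho L"
    and sc: "\<sigma> \<in> carrier_mat n n" and hZ: "hermitian n Z"
  shows "- mtrace (L \<sigma> * Z) = - kms n rho Z (hs_adj n L (Si * \<sigma> * Si))"
proof -
  have Zc: "Z \<in> carrier_mat n n" and aZ: "adj Z = Z" using hZ unfolding hermitian_def by auto
  define X where "X = Si * \<sigma> * Si"
  have Xc: "X \<in> carrier_mat n n" unfolding X_def using sc by simp
  obtain A where A: "A = hs_adj n L Z" by blast
  have Ac: "A \<in> carrier_mat n n" and Ap: "\<forall>B \<in> carrier_mat n n. mtrace (adj A * B) = mtrace (adj Z * L B)"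
    using hs_adj_lind[OF Lind Zc] A by auto
  have aA: "adj A \<in> carrier_mat n n" using Ac by simp
  have Lsc: "L \<sigma> \<in> carrier_mat n n" by (rule lind_carrier[OF Lind sc])
  have "kms n rho Z (hs_adj n L X) = kms n rho A X"
    using KS Zc Xc A unfolding kms_symmetric_def by blast
  also have "\<dots> = mtrace (S * adj A * S * X)" by (rule kms_eq)
  also have "\<dots> = mtrace (S * (adj A * S * X))" using aA Xc by (simp add: sq_assoc[of _ n])
  also have "\<dots> = mtrace ((adj A * S * X) * S)" using cyc[of S n "adj A * S * X"] aA Xc by simp
  also have "(adj A * S * X) * S = adj A * ((S * Si) * \<sigma> * (Si * S))"
    unfolding X_def using aA sc by (simp add: sq_assoc[of _ n])
  also have "\<dots> = adj A * \<sigma>" unfolding S_Si using sc by simp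
  also have "mtrace (adj A * \<sigma>) = mtrace (adj Z * L \<sigma>)" using Ap sc by blast
  also have "\<dots> = mtrace (L \<sigma> * Z)" unfolding aZ by (rule cyc[OF Zc Lsc])
  finally show ?thesis unfolding X_def by simp
qed

lemma Wv: assumes v: "v \<in> carrier_vec n" shows "W t *\<^sub>v (adj (W t) *\<^sub>v v) = v"
proof -
  note w = unitary_cancel[OF W_unitary[of t]]
  have "(W t * adj (W t)) *\<^sub>v v = W t *\<^sub>v (adj (W t) *\<^sub>v v)" by (rule assoc_mult_mat_vec, insert v, auto)
  then show ?thesis using w v by simp
qed

lemma density_conj: assumes D: "density n \<sigma>" and P: "posdef n \<sigma>"
  shows "density n (W t * \<sigma> * adj (W t))" and "posdef n (W t * \<sigma> * adj (W t))"
proof -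
  note w = unitary_cancel[OF W_unitary[of t]]
  have hs: "hermitian n \<sigma>" using D unfolding density_def psd_def by simp
  have sc: "\<sigma> \<in> carrier_mat n n" using hs hermitianD by auto
  have hst: "hermitian n (W t * \<sigma> * adj (W t))" by (rule conj_herm[OF hs])
  have q: "conjugate v \<bullet> ((W t * \<sigma> * adj (W t)) *\<^sub>v v) = conjugate (adj (W t) *\<^sub>v v) \<bullet> (\<sigma> *\<^sub>v (adj (W t) *\<^sub>v v))"
    if "v \<in> carrier_vec n" for v by (rule quad_conj[OF _ sc that], simp)
  have wc: "adj (W t) *\<^sub>v v \<in> carrier_vec n" if "v \<in> carrier_vec n" for v
    using that w by (metis mult_mat_vec_carrier)
  have "psd n (W t * \<sigma> * adj (W t))"
    unfolding psd_def using hst q wc D unfolding density_def psd_def by auto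
  moreover have "mtrace (W t * \<sigma> * adj (W t)) = 1" using mtrace_conjW[OF sc] D unfolding density_def by simp
  ultimately show "density n (W t * \<sigma> * adj (W t))" unfolding density_def by simp
  have nz: "adj (W t) *\<^sub>v v \<noteq> 0\<^sub>v n" if "v \<in> carrier_vec n" "v \<noteq> 0\<^sub>v n" for v
  proof
    assume "adj (W t) *\<^sub>v v = 0\<^sub>v n"
    moreover have "W t *\<^sub>v 0\<^sub>v n = 0\<^sub>v n" by (intro eq_vecI, insert w, auto)
    ultimately have "W t *\<^sub>v (adj (W t) *\<^sub>v v) = 0\<^sub>v n" by simp
    then show False using Wv[OF that(1)] that(2) by simp
  qed
  show "posdef n (W t * \<sigma> * adj (W t))"
    unfolding posdef_def using hst q wc nz P unfolding posdef_def by auto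
qed

end


context hset
begin

definition ratioM where "ratioM L \<sigma> = entropy_prod n L rho \<sigma> / rel_entropy n \<sigma> rho"

lemma mlsi_eq: "mlsi_const n rho L = Inf {ereal (ratioM L \<sigma>) | \<sigma>. density n \<sigma> \<and> posdef n \<sigma> \<and> \<sigma> \<noteq> rho}"
  unfolding mlsi_const_def ratioM_def ..

lemma mlsi_part:
  fixes Ld Ld' :: "complex mat \<Rightarrow> complex mat" and fd fd' g :: "real \<Rightarrow> real"
    and Einf :: "complex mat \<Rightarrow> complex mat \<Rightarrow> real \<Rightarrow> complex"
  assumes fd_int: "integrable lborel fd" and fd_nn: "\<forall>r. fd r \<ge> 0"
    and fd'_int: "integrable lborel fd'" and fd'_nn: "\<forall>r. fd' r \<ge> 0"
    and g_nn: "\<forall>r. g r \<ge> 0" and g_meas: "g \<in> borel_measurable lborel"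
    and semi: "\<forall>s. ennreal (fd s) = (\<integral>\<^sup>+ r. ennreal (g r * fd' (s - r)) \<partial>lborel)"
    and conv: "\<And>X Y. hermitian n X \<Longrightarrow> hermitian n Y \<Longrightarrow> is_convolution fd (Einf X Y) (corr_E n \<beta> H Ld X Y)"
    and conv': "\<And>X Y. hermitian n X \<Longrightarrow> hermitian n Y \<Longrightarrow> is_convolution fd' (Einf X Y) (corr_E n \<beta> H Ld' X Y)"
    and Lind: "lindbladian n Ld" and KS: "kms_symmetric n rho Ld"
    and Lind': "lindbladian n Ld'" and KS': "kms_symmetric n rho Ld'"
  shows "l1_norm g * mlsi_const n rho Ld' \<le> mlsi_const n rho Ld"
  unfolding mlsi_eq[of Ld]
proof (rule Inf_greatest)
  fix z assume "z \<in> {ereal (ratioM Ld \<sigma>) | \<sigma>. density n \<sigma> \<and> posdef n \<sigma> \<and> \<sigma> \<noteq> rho}"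
  then obtain \<sigma> where z: "z = ereal (ratioM Ld \<sigma>)" and D: "density n \<sigma>" and P: "posdef n \<sigma>" and ne: "\<sigma> \<noteq> rho"
    by blast
  have hs: "hermitian n \<sigma>" using D unfolding density_def psd_def by simp
  have sc: "\<sigma> \<in> carrier_mat n n" using hs hermitianD by auto
  obtain V q where V: "unitary n V" and sV: "\<sigma> = fU n V (\<lambda>i. complex_of_real (q i))"
    using spectral_fU[OF hs] by blast
  define Ls where "Ls = fU n V (\<lambda>i. complex_of_real (ln (q i)))"
  have mls: "mlog n \<sigma> = Ls" unfolding mlog_def Ls_def by (rule matfun_fU[OF V sV])
  have Lsc: "Ls \<in> carrier_mat n n" unfolding Ls_def using V by simp
  have hLs: "hermitian n Ls" unfolding Ls_def by (rule fU_hermitian[OF V])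
  define Z where "Z = Ls - LR"
  have Zc: "Z \<in> carrier_mat n n" unfolding Z_def by (simp add: minus_carrier_mat)
  have hZ: "hermitian n Z" unfolding hermitian_def Z_def using hLs Lsc
    by (simp add: adj_minus[of _ n n] minus_carrier_mat hermitian_def)
  define X where "X = Si * \<sigma> * Si"
  have Xc: "X \<in> carrier_mat n n" unfolding X_def using sc by simp
  have hX: "hermitian n X" unfolding hermitian_def X_def using hs sc
    by (simp add: adj_mult[of _ n n _ n] sq_assoc[of _ n] hermitian_def)
  define DD where "DD = rel_entropy n \<sigma> rho"
  have DDe: "DD = Re (mtrace (\<sigma> * Z))" unfolding DD_def rel_entropy_def mls mlog_rho Z_def ..
  have c0: "corr_E n \<beta> H Ld X Z 0 = - kms n rho Z (hs_adj n Ld X)" by (rule corrE0[OF Xc Zc])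
  have EPe: "entropy_prod n Ld rho \<sigma> = Re (corr_E n \<beta> H Ld X Z 0)"
  proof -
    have "entropy_prod n Ld rho \<sigma> = Re (- mtrace (Ld \<sigma> * Z))"
      unfolding entropy_prod_def mls mlog_rho Z_def ..
    also have "- mtrace (Ld \<sigma> * Z) = - kms n rho Z (hs_adj n Ld X)"
      unfolding X_def by (rule EP_lemma[OF Lind KS sc hZ])
    finally show ?thesis unfolding c0 .
  qed
  define N where "N s = corr_E n \<beta> H Ld' X Z s" for s
  have intN: "integrable lborel (\<lambda>u. complex_of_real (g u) * N (- u))"
    and E0: "corr_E n \<beta> H Ld X Z 0 = (LINT u|lborel. complex_of_real (g u) * N (- u))"
    unfolding N_def using conv_fubini[OF fd_int fd_nn fd'_int fd'_nn g_nn g_meas semi conv[OF hX hZ] conv'[OF hX hZ]]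
    by auto
  define h where "h u = Re (N (- u)) / DD" for u
  have intR: "integrable lborel (\<lambda>u. Re (complex_of_real (g u) * N (- u)))" by (rule integrable_Re[OF intN])
  have inth: "integrable lborel (\<lambda>u. g u * h u)"
  proof -
    have "integrable lborel (\<lambda>u. Re (complex_of_real (g u) * N (- u)) / DD)" using intR by (rule integrable_divide_zero)
    moreover have "(\<lambda>u. Re (complex_of_real (g u) * N (- u)) / DD) = (\<lambda>u. g u * h u)"
      unfolding h_def by auto
    ultimately show ?thesis by metis
  qed
  have ratio: "ratioM Ld \<sigma> = (LINT u|lborel. g u * h u)"
  proof -
    have "ratioM Ld \<sigma> = Re (corr_E n \<beta> H Ld X Z 0) / DD"
      unfolding ratioM_def DD_def EPe ..
    also have "\<dots> = (LINT u|lborel. Re (complex_of_real (g u) * N (- u))) / DD"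
      unfolding E0 integral_Re[OF intN] ..
    also have "\<dots> = (LINT u|lborel. Re (complex_of_real (g u) * N (- u)) / DD)" by (rule integral_divide_zero[symmetric])
    also have "(\<lambda>u. Re (complex_of_real (g u) * N (- u)) / DD) = (\<lambda>u. g u * h u)"
      unfolding h_def by auto
    finally show ?thesis .
  qed
  have hb: "\<forall>u. mlsi_const n rho Ld' \<le> ereal (h u)"
  proof
    fix u
    define t where "t = - u * \<beta>"
    note w = unitary_cancel[OF W_unitary[of t]]
    define \<sigma>t where "\<sigma>t = W t * \<sigma> * adj (W t)"
    have stc: "\<sigma>t \<in> carrier_mat n n" unfolding \<sigma>t_def using sc by simp
    have Dt: "density n \<sigma>t" and Pt: "posdef n \<sigma>t" unfolding \<sigma>t_def using density_conj[OF D P] by auto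
    have net: "\<sigma>t \<noteq> rho"
    proof
      assume "\<sigma>t = rho"
      then have "W t * \<sigma> * adj (W t) = W t * rho * adj (W t)" unfolding \<sigma>t_def rho_fix .
      then have "\<sigma> = rho" by (rule conjW_inj[OF sc carriers(6)])
      then show False using ne by simp
    qed
    have WV: "unitary n (W t * V)" by (rule unitary_mult[OF W_unitary V])
    have st_fU: "\<sigma>t = fU n (W t * V) (\<lambda>i. complex_of_real (q i))"
      unfolding \<sigma>t_def sV by (rule fU_conj[OF W_unitary V, symmetric])
    have mlst: "mlog n \<sigma>t = W t * Ls * adj (W t)"
      unfolding mlog_def matfun_fU[OF WV st_fU] Ls_def by (rule fU_conj[OF W_unitary V])
    have Zt: "W t * Z * adj (W t) = mlog n \<sigma>t - LR"
      unfolding Z_def mlst using Lsc by (simp add: conjW_minus LR_fix)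
    have Xt: "W t * X * adj (W t) = Si * \<sigma>t * Si"
    proof -
      have "Si * \<sigma>t * Si = (W t * Si * adj (W t)) * (W t * \<sigma> * adj (W t)) * (W t * Si * adj (W t))"
        unfolding Si_fix \<sigma>t_def ..
      also have "(W t * Si * adj (W t)) * (W t * \<sigma> * adj (W t)) = W t * (Si * \<sigma>) * adj (W t)"
        by (rule conjW_mult[OF carriers(2) sc])
      also have "\<dots> * (W t * Si * adj (W t)) = W t * (Si * \<sigma> * Si) * adj (W t)"
        by (rule conjW_mult, insert sc, auto)
      finally show ?thesis unfolding X_def by simp
    qed
    have hZt: "hermitian n (mlog n \<sigma>t - LR)" unfolding Zt[symmetric] by (rule conj_herm[OF hZ])
    have Nu: "N (- u) = - mtrace (Ld' \<sigma>t * (mlog n \<sigma>t - LR))"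
    proof -
      have "N (- u) = - kms n rho (W t * Z * adj (W t)) (hs_adj n Ld' (W t * X * adj (W t)))"
        unfolding N_def corrE_eq[OF Xc] t_def by simp
      also have "\<dots> = - kms n rho (mlog n \<sigma>t - LR) (hs_adj n Ld' (Si * \<sigma>t * Si))" unfolding Zt Xt ..
      also have "\<dots> = - mtrace (Ld' \<sigma>t * (mlog n \<sigma>t - LR))" by (rule EP_lemma[OF Lind' KS' stc hZt, symmetric])
      finally show ?thesis .
    qed
    have DDt: "rel_entropy n \<sigma>t rho = DD"
    proof -
      have "rel_entropy n \<sigma>t rho = Re (mtrace (\<sigma>t * (W t * Z * adj (W t))))"
        unfolding rel_entropy_def mlog_rho Zt ..
      also have "\<sigma>t * (W t * Z * adj (W t)) = W t * (\<sigma> * Z) * adj (W t)"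
        unfolding \<sigma>t_def by (rule conjW_mult[OF sc Zc])
      also have "mtrace \<dots> = mtrace (\<sigma> * Z)" by (rule mtrace_conjW, insert sc Zc, simp)
      finally show ?thesis unfolding DDe .
    qed
    have "h u = ratioM Ld' \<sigma>t"
      unfolding h_def ratioM_def entropy_prod_def DDt Nu mlog_rho ..
    moreover have "ereal (ratioM Ld' \<sigma>t) \<in> {ereal (ratioM Ld' \<sigma>) | \<sigma>. density n \<sigma> \<and> posdef n \<sigma> \<and> \<sigma> \<noteq> rho}"
      using Dt Pt net by blast
    ultimately show "mlsi_const n rho Ld' \<le> ereal (h u)" unfolding mlsi_eq by (simp add: Inf_lower)
  qed
  show "l1_norm g * mlsi_const n rho Ld' \<le> z"
    unfolding z ratio by (rule ereal_bound[OF g_nn g_meas inth hb])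
qed

end


theorem lemma4:
  fixes n :: nat and H :: "complex mat" and \<beta> :: real
    and L :: "real \<Rightarrow> complex mat \<Rightarrow> complex mat"
    and f :: "real \<Rightarrow> real \<Rightarrow> real"
    and g :: "real \<Rightarrow> real \<Rightarrow> real \<Rightarrow> real"
    and Einf :: "complex mat \<Rightarrow> complex mat \<Rightarrow> real \<Rightarrow> complex"
    and \<delta> \<delta>' :: real
  assumes n_pos: "n > 0"
    and H_herm: "hermitian n H"
    and beta_pos: "\<beta> > 0"
    and L_prop: "\<And>d. d \<ge> 0 \<Longrightarrow>
        lindbladian n (L d) \<and> primitive n (L d) \<and> kms_symmetric n (gibbs n \<beta> H) (L d)"
    and f_prop: "\<And>d. d \<ge> 0 \<Longrightarrow> integrable lborel (f d) \<and> (\<forall>r. f d r \<ge> 0)"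
    and semigroup: "\<And>d d'. 0 \<le> d \<Longrightarrow> d \<le> d' \<Longrightarrow>
        (\<forall>r. g d d' r \<ge> 0) \<and> g d d' \<in> borel_measurable lborel \<and>
        (\<forall>s. ennreal (f d s) = (\<integral>\<^sup>+ r. ennreal (g d d' r * f d' (s - r)) \<partial>lborel))"
    and E_conv: "\<And>X Y d. hermitian n X \<Longrightarrow> hermitian n Y \<Longrightarrow> d \<ge> 0 \<Longrightarrow>
        is_convolution (f d) (Einf X Y) (corr_E n \<beta> H (L d) X Y)"
    and d_nonneg: "0 \<le> \<delta>"
    and d_le: "\<delta> \<le> \<delta>'"
  shows "spectral_gap n (gibbs n \<beta> H) (L \<delta>)
           \<ge> l1_norm (g \<delta> \<delta>') * spectral_gap n (gibbs n \<beta> H) (L \<delta>')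
       \<and> mlsi_const n (gibbs n \<beta> H) (L \<delta>)
           \<ge> l1_norm (g \<delta> \<delta>') * mlsi_const n (gibbs n \<beta> H) (L \<delta>')"
proof -
  obtain U d where U: "unitary n U" and Hd: "H = fU n U (\<lambda>i. complex_of_real (d i))"
    using spectral_fU[OF H_herm] by blast
  interpret hset n H \<beta> U d by (unfold_locales, rule U, rule Hd, rule n_pos)
  have d'_nonneg: "0 \<le> \<delta>'" using d_nonneg d_le by simp
  have g_nn: "\<forall>r. g \<delta> \<delta>' r \<ge> 0" and g_meas: "g \<delta> \<delta>' \<in> borel_measurable lborel"
    and semi: "\<forall>s. ennreal (f \<delta> s) = (\<integral>\<^sup>+ r. ennreal (g \<delta> \<delta>' r * f \<delta>' (s - r)) \<partial>lborel)"
    using semigroup[OF d_nonneg d_le] by auto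
  have f1: "integrable lborel (f \<delta>)" "\<forall>r. f \<delta> r \<ge> 0" using f_prop[OF d_nonneg] by auto
  have f2: "integrable lborel (f \<delta>')" "\<forall>r. f \<delta>' r \<ge> 0" using f_prop[OF d'_nonneg] by auto
  have L1: "lindbladian n (L \<delta>)" "kms_symmetric n (gibbs n \<beta> H) (L \<delta>)" using L_prop[OF d_nonneg] by auto
  have L2: "lindbladian n (L \<delta>')" "kms_symmetric n (gibbs n \<beta> H) (L \<delta>')" using L_prop[OF d'_nonneg] by auto
  have c1: "\<And>X Y. hermitian n X \<Longrightarrow> hermitian n Y \<Longrightarrow> is_convolution (f \<delta>) (Einf X Y) (corr_E n \<beta> H (L \<delta>) X Y)"
    using E_conv d_nonneg by blast
  have c2: "\<And>X Y. hermitian n X \<Longrightarrow> hermitian n Y \<Longrightarrow> is_convolution (f \<delta>') (Einf X Y) (corr_E n \<beta> H (L \<delta>') X Y)"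
    using E_conv d'_nonneg by blast
  have "l1_norm (g \<delta> \<delta>') * spectral_gap n (gibbs n \<beta> H) (L \<delta>') \<le> spectral_gap n (gibbs n \<beta> H) (L \<delta>)"
    by (rule gap_part[OF f1 f2 g_nn g_meas semi c1 c2])
  moreover have "l1_norm (g \<delta> \<delta>') * mlsi_const n (gibbs n \<beta> H) (L \<delta>') \<le> mlsi_const n (gibbs n \<beta> H) (L \<delta>)"
    by (rule mlsi_part[OF f1 f2 g_nn g_meas semi c1 c2 L1 L2])
  ultimately show ?thesis by simp
qed


end
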